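(* Under the hypotheses of Proposition 1 (i.e. the Lax-Sato equations $\frac{\partial K}{\partial t_{mn}}=\{H_{mn},K\}$ for $K\in\{\mathcal{L},\mathcal{M},\hat{\mathcal{L}},\hat{\mathcal{M}}\}$ and $\{\mathcal{L},\mathcal{M}\}=\{\hat{\mathcal{L}},\hat{\mathcal{M}}\}=1$), for all positive integers $m,n,k,l$, $$\frac{\partial (v_{m+1}+\hat v_{n+1})}{\partial t_{kl}}=\frac{\partial (v_{k+1}+\hat v_{l+1})}{\partial t_{mn}}.$$
   Context: Variables: $t=(t_{mn})$ with $m,n\in\mathbb{N}$, $m+n\ge 1$, $t_{10}\equiv z$, $t_{01}\equiv\hat z$; $p$ is a complex parameter. Poisson bracket: $\{A,B\}=\frac{\partial A}{\partial p}\frac{\partial B}{\partial z}-\frac{\partial A}{\partial z}\frac{\partial B}{\partial p}$. $\mathcal{L}=p+\sum_{i\le 0}f_i(t)p^i$, $\hat{\mathcal{L}}=\frac{u(t)}{p}+\sum_{i\ge 0}g_i(t)p^i$ are formal Laurent series in $p$. $(\cdot)_{>0}$, $(\cdot)_{\le 0}$ denote the parts with positive, resp. non-positive, powers of $p$. $H_{mn}=(\mathcal{L}^m)_{>0}+(\hat{\mathcal{L}}^n)_{\le 0}$. $\mathcal{M}=\sum_{m+n\ge 2}m\,t_{mn}\mathcal{L}^{m-1}+z+\sum_{i=1}^{\infty}v_{i+1}\mathcal{L}^{-i-1}$, $\hat{\mathcal{M}}=\sum_{m+n\ge 2}n\,t_{mn}\hat{\mathcal{L}}^{n-1}+\hat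 z+\sum_{i=1}^{\infty}\hat v_{i+1}\hat{\mathcal{L}}^{-i-1}$. *)

theory Defs
  imports "HOL-Analysis.Analysis"
begin

(* Times t = (t_{mn}); index (1,0) is z, (0,1) is zhat; t(0,0) unused (set to 0).
   We work on finitely supported times, so that all infinite sums occurring in
   M and Mhat have, coefficient-wise, only finitely many nonzero terms. *)
type_synonym times = "nat \<times> nat \<Rightarrow> complex"

definition fin_times :: "times \<Rightarrow> bool" where
  "fin_times t \<longleftrightarrow> finite {q. t q \<noteq> 0} \<and> t (0,0) = 0"

(* formal Laurent series in p, given by its coefficient function: A j = coefficient of p^j *)
type_synonym ser = "int \<Rightarrow> complex"

definition ser_one :: ser where "ser_one j = (if j = 0 then 1 else 0)"
definition ser_const :: "complex \<Rightarrow> ser" where "ser_const c j = (if j = 0 then c else 0)"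
definition ser_add :: "ser \<Rightarrow> ser \<Rightarrow> ser" where "ser_add A B j = A j + B j"
definition ser_sub :: "ser \<Rightarrow> ser \<Rightarrow> ser" where "ser_sub A B j = A j - B j"
definition ser_smul :: "complex \<Rightarrow> ser \<Rightarrow> ser" where "ser_smul c A j = c * A j"

(* Cauchy product; the defining sum is finite whenever the product makes sense
   (e.g. both factors bounded above, or both bounded below, or one a Laurent polynomial) *)
definition ser_mult :: "ser \<Rightarrow> ser \<Rightarrow> ser" where
  "ser_mult A B j = (\<Sum>a | A a \<noteq> 0 \<and> B (j - a) \<noteq> 0. A a * B (j - a))"

primrec ser_pow :: "ser \<Rightarrow> nat \<Rightarrow> ser" where
  "ser_pow A 0 = ser_one"
| "ser_pow A (Suc k) = ser_mult A (ser_pow A k)"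

(* sum of a family of series, coefficient-wise (finitely many nonzero terms per coefficient) *)
definition ser_sum :: "'i set \<Rightarrow> ('i \<Rightarrow> ser) \<Rightarrow> ser" where
  "ser_sum I F j = (\<Sum>x | x \<in> I \<and> F x j \<noteq> 0. F x j)"

definition bdd_above_ser :: "ser \<Rightarrow> bool" where
  "bdd_above_ser A \<longleftrightarrow> (\<exists>N. \<forall>j>N. A j = 0)"
definition bdd_below_ser :: "ser \<Rightarrow> bool" where
  "bdd_below_ser A \<longleftrightarrow> (\<exists>N. \<forall>j<N. A j = 0)"

(* inverse in the field of series bounded above in p (Laurent series in 1/p) *)
definition inv_up :: "ser \<Rightarrow> ser" where
  "inv_up A = (THE B. bdd_above_ser B \<and> ser_mult A B = ser_one)"
(* inverse in the field of series bounded below in p (Laurent series in p) *)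
definition inv_down :: "ser \<Rightarrow> ser" where
  "inv_down A = (THE B. bdd_below_ser B \<and> ser_mult A B = ser_one)"

definition pos_part :: "ser \<Rightarrow> ser" where "pos_part A j = (if j > 0 then A j else 0)"
definition nonpos_part :: "ser \<Rightarrow> ser" where "nonpos_part A j = (if j \<le> 0 then A j else 0)"

definition ser_dp :: "ser \<Rightarrow> ser" where "ser_dp A j = of_int (j + 1) * A (j + 1)"

definition pdt :: "nat \<times> nat \<Rightarrow> (times \<Rightarrow> complex) \<Rightarrow> times \<Rightarrow> complex" where
  "pdt q F t = deriv (\<lambda>s. F (t(q := s))) (t q)"

type_synonym fam = "times \<Rightarrow> ser"

definition fam_pdt :: "nat \<times> nat \<Rightarrow> fam \<Rightarrow> times \<Rightarrow> ser" where
  "fam_pdt q K t j = pdt q (\<lambda>t'. K t' j) t"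

definition pbr :: "fam \<Rightarrow> fam \<Rightarrow> fam" where
  "pbr A B t = ser_sub (ser_mult (ser_dp (A t)) (fam_pdt (1,0) B t))
                       (ser_mult (fam_pdt (1,0) A t) (ser_dp (B t)))"

definition Lser :: "(int \<Rightarrow> times \<Rightarrow> complex) \<Rightarrow> fam" where
  "Lser f t j = (if j = 1 then 1 else if j \<le> 0 then f j t else 0)"

definition Lhser :: "(times \<Rightarrow> complex) \<Rightarrow> (nat \<Rightarrow> times \<Rightarrow> complex) \<Rightarrow> fam" where
  "Lhser u g t j = (if j = -1 then u t else if j \<ge> 0 then g (nat j) t else 0)"

definition Hser :: "fam \<Rightarrow> fam \<Rightarrow> nat \<Rightarrow> nat \<Rightarrow> fam" where
  "Hser L Lh m n t = ser_add (pos_part (ser_pow (L t) m)) (nonpos_part (ser_pow (Lh t) n))"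

definition Mser :: "fam \<Rightarrow> (nat \<Rightarrow> times \<Rightarrow> complex) \<Rightarrow> fam" where
  "Mser L v t = ser_add
     (ser_add (ser_sum {(m,n). m + n \<ge> 2} (\<lambda>(m,n). ser_smul (of_nat m * t (m,n)) (ser_pow (L t) (m - 1))))
              (ser_const (t (1,0))))
     (ser_sum {i. i \<ge> 1} (\<lambda>i. ser_smul (v (i + 1) t) (ser_pow (inv_up (L t)) (i + 1))))"

definition Mhser :: "fam \<Rightarrow> (nat \<Rightarrow> times \<Rightarrow> complex) \<Rightarrow> fam" where
  "Mhser Lh vh t = ser_add
     (ser_add (ser_sum {(m,n). m + n \<ge> 2} (\<lambda>(m,n). ser_smul (of_nat n * t (m,n)) (ser_pow (Lh t) (n - 1))))
              (ser_const (t (0,1))))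
     (ser_sum {i. i \<ge> 1} (\<lambda>i. ser_smul (vh (i + 1) t) (ser_pow (inv_down (Lh t)) (i + 1))))"

definition regular :: "(times \<Rightarrow> complex) \<Rightarrow> bool" where
  "regular F \<longleftrightarrow> (\<forall>t q. fin_times t \<and> fst q + snd q \<ge> 1 \<longrightarrow>
      (\<lambda>s. F (t(q := s))) field_differentiable at (t q))"

definition lax_eq :: "fam \<Rightarrow> fam \<Rightarrow> nat \<Rightarrow> nat \<Rightarrow> bool" where
  "lax_eq H K m n \<longleftrightarrow> (\<forall>t j. fin_times t \<longrightarrow>
      ((\<lambda>s. K (t((m,n) := s)) j) has_field_derivative pbr H K t j) (at (t (m,n))))"

end

theory Submission
  imports Defs "HOL-Computational_Algebra.Formal_Laurent_Series"
begin
unbundle fps_syntax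


definition sg :: "int \<Rightarrow> bool" where "sg s \<longleftrightarrow> s = 1 \<or> s = -1"

lemma sg_sq: "sg s \<Longrightarrow> s * (s * j) = j"
  by (auto simp: sg_def)

definition bnd :: "int \<Rightarrow> ser \<Rightarrow> bool" where
  "bnd s A \<longleftrightarrow> (\<exists>N. \<forall>j. s * j < N \<longrightarrow> A j = 0)"

definition Phi :: "int \<Rightarrow> ser \<Rightarrow> complex fls" where
  "Phi s A = Abs_fls (\<lambda>j. A (s * j))"

lemma Phi_nth: assumes "sg s" "bnd s A" shows "Phi s A $$ j = A (s * j)"
proof -
  from assms(2) obtain N where N: "\<forall>j. s * j < N \<longrightarrow> A j = 0" by (auto simp: bnd_def)
  have "\<forall>n<N. A (s * n) = 0" using N sg_sq[OF assms(1)] by metis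
  then show ?thesis unfolding Phi_def by (rule nth_Abs_fls_lower_bound)
qed

lemma Phi_nth': assumes "sg s" "bnd s A" shows "A j = Phi s A $$ (s * j)"
  using Phi_nth[OF assms, of "s*j"] sg_sq[OF assms(1)] by simp

lemma Phi_inj: assumes "sg s" "bnd s A" "bnd s B" "Phi s A = Phi s B" shows "A = B"
  using Phi_nth'[OF assms(1,2)] Phi_nth'[OF assms(1,3)] assms(4) by auto

definition lbf :: "int \<Rightarrow> complex fls \<Rightarrow> bool" where
  "lbf a F \<longleftrightarrow> (\<forall>j<a. F $$ j = 0)"

lemma lbf_mono: "lbf a F \<Longrightarrow> b \<le> a \<Longrightarrow> lbf b F"
  by (auto simp: lbf_def)

lemma times_nth_lb:
  assumes "lbf a F" "lbf b G"
  shows "(F * G) $$ n = (\<Sum>i=a..n-b. F $$ i * G $$ (n - i))"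
proof (cases "F = 0 \<or> G = 0")
  case True then show ?thesis by auto
next
  case False
  hence nz: "F \<noteq> 0" "G \<noteq> 0" by auto
  have da: "a \<le> fls_subdegree F" using assms(1) nz(1)
    by (intro fls_subdegree_geI) (auto simp: lbf_def)
  have db: "b \<le> fls_subdegree G" using assms(2) nz(2)
    by (intro fls_subdegree_geI) (auto simp: lbf_def)
  have "(F * G) $$ n = (\<Sum>i=fls_subdegree F..n - fls_subdegree G. F $$ i * G $$ (n - i))"
    by (rule fls_times_nth(2))
  also have "\<dots> = (\<Sum>i=a..n-b. F $$ i * G $$ (n - i))"
  proof (rule sum.mono_neutral_left)
    show "finite {a..n-b}" by simp
    show "{fls_subdegree F..n - fls_subdegree G} \<subseteq> {a..n-b}" using da db by auto
    show "\<forall>i\<in>{a..n - b} - {fls_subdegree F..n - fls_subdegree G}. F $$ i * G $$ (n - i) = 0"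
      by auto
  qed
  finally show ?thesis .
qed

lemma lbf_times: "lbf a F \<Longrightarrow> lbf b G \<Longrightarrow> lbf (a + b) (F * G)"
  by (subst lbf_def, auto simp: times_nth_lb)

lemma bnd_lbf: assumes "sg s" "bnd s A" shows "\<exists>N. lbf N (Phi s A)"
proof -
  from assms(2) obtain N where N: "\<forall>j. s * j < N \<longrightarrow> A j = 0" by (auto simp: bnd_def)
  have "lbf N (Phi s A)" unfolding lbf_def using N Phi_nth[OF assms] sg_sq[OF assms(1)] by metis
  thus ?thesis by blast
qed

lemma times_nth_nzset:
  assumes "lbf a F" "lbf b G"
  shows "(F * G) $$ n = (\<Sum>i | F $$ i \<noteq> 0 \<and> G $$ (n - i) \<noteq> 0. F $$ i * G $$ (n - i))"
proof -
  have sub: "{i. F $$ i \<noteq> 0 \<and> G $$ (n - i) \<noteq> 0} \<subseteq> {a..n-b}"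
    using assms by (force simp: lbf_def)
  have "(F * G) $$ n = (\<Sum>i=a..n-b. F $$ i * G $$ (n - i))" by (rule times_nth_lb[OF assms])
  also have "\<dots> = (\<Sum>i | F $$ i \<noteq> 0 \<and> G $$ (n - i) \<noteq> 0. F $$ i * G $$ (n - i))"
    by (rule sum.mono_neutral_right) (use sub in auto)
  finally show ?thesis .
qed

lemma ser_mult_Phi_nth:
  assumes "sg s" "bnd s A" "bnd s B"
  shows "ser_mult A B (s * n) = (Phi s A * Phi s B) $$ n"
proof -
  obtain a b where ab: "lbf a (Phi s A)" "lbf b (Phi s B)" using bnd_lbf assms by blast
  have inj: "inj ((*) s)" using assms(1) by (auto simp: sg_def inj_def)
  have img: "(*) s ` {i. Phi s A $$ i \<noteq> 0 \<and> Phi s B $$ (n - i) \<noteq> 0}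
        = {x. A x \<noteq> 0 \<and> B (s * n - x) \<noteq> 0}"
  proof -
    have "x \<in> (*) s ` {i. Phi s A $$ i \<noteq> 0 \<and> Phi s B $$ (n - i) \<noteq> 0} \<longleftrightarrow>
          (A x \<noteq> 0 \<and> B (s * n - x) \<noteq> 0)" for x
    proof -
      have "x = s * (s * x)" using sg_sq[OF assms(1)] by simp
      have e: "Phi s A $$ i = A (s * i)" "Phi s B $$ (n - i) = B (s * n - s * i)" for i
        using Phi_nth[OF assms(1,2)] Phi_nth[OF assms(1,3)] by (auto simp: algebra_simps)
      show ?thesis
      proof
        assume "x \<in> (*) s ` {i. Phi s A $$ i \<noteq> 0 \<and> Phi s B $$ (n - i) \<noteq> 0}"
        then obtain i where "x = s * i" "Phi s A $$ i \<noteq> 0 \<and> Phi s B $$ (n - i) \<noteq> 0" by auto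
        thus "A x \<noteq> 0 \<and> B (s * n - x) \<noteq> 0" using e by auto
      next
        assume a: "A x \<noteq> 0 \<and> B (s * n - x) \<noteq> 0"
        have "Phi s A $$ (s * x) \<noteq> 0 \<and> Phi s B $$ (n - s * x) \<noteq> 0"
          using a e[of "s * x"] sg_sq[OF assms(1)] by simp
        thus "x \<in> (*) s ` {i. Phi s A $$ i \<noteq> 0 \<and> Phi s B $$ (n - i) \<noteq> 0}"
          using \<open>x = s * (s * x)\<close> by blast
      qed
    qed
    thus ?thesis by blast
  qed
  have "(Phi s A * Phi s B) $$ n = (\<Sum>i | Phi s A $$ i \<noteq> 0 \<and> Phi s B $$ (n - i) \<noteq> 0. Phi s A $$ i * Phi s B $$ (n - i))"
    by (rule times_nth_nzset[OF ab])
  also have "\<dots> = (\<Sum>i | Phi s A $$ i \<noteq> 0 \<and> Phi s B $$ (n - i) \<noteq> 0. A (s * i) * B (s * n - s * i))"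
    by (rule sum.cong) (auto simp: Phi_nth[OF assms(1,2)] Phi_nth[OF assms(1,3)] algebra_simps)
  also have "\<dots> = (\<Sum>x\<in>(*) s ` {i. Phi s A $$ i \<noteq> 0 \<and> Phi s B $$ (n - i) \<noteq> 0}. A x * B (s * n - x))"
    by (rule sum.reindex[symmetric, unfolded comp_def]) (use inj in \<open>auto simp: inj_on_def\<close>)
  also have "\<dots> = ser_mult A B (s * n)" unfolding img ser_mult_def ..
  finally show ?thesis ..
qed

lemma bnd_of_Phi: assumes "sg s" "\<And>j. A j = F $$ (s * j)" shows "bnd s A"
proof -
  obtain N :: nat where "\<forall>n>N. F $$ (-int n) = 0" by (rule fls_nth_vanishes_below_natE)
  hence "\<forall>j. j < - int N \<longrightarrow> F $$ j = 0"
  proof (intro allI impI)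
    fix j :: int assume j: "j < - int N"
    hence "nat (-j) > N" "j = - int (nat (-j))" by auto
    thus "F $$ j = 0" using \<open>\<forall>n>N. F $$ (-int n) = 0\<close> by metis
  qed
  hence "\<forall>j. s * j < - int N \<longrightarrow> A j = 0" using assms by simp
  thus ?thesis unfolding bnd_def by blast
qed

lemma Phi_of: assumes "sg s" "\<And>j. A j = F $$ (s * j)" shows "Phi s A = F"
proof (rule fls_eqI)
  fix n have "Phi s A $$ n = A (s * n)" by (rule Phi_nth[OF assms(1) bnd_of_Phi[OF assms]])
  also have "\<dots> = F $$ (s * (s * n))" by (rule assms(2))
  also have "\<dots> = F $$ n" by (simp only: sg_sq[OF assms(1)])
  finally show "Phi s A $$ n = F $$ n" .
qed

lemma ser_mult_Phi:
  assumes "sg s" "bnd s A" "bnd s B"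
  shows "bnd s (ser_mult A B)" "Phi s (ser_mult A B) = Phi s A * Phi s B"
proof -
  have *: "ser_mult A B j = (Phi s A * Phi s B) $$ (s * j)" for j
    using ser_mult_Phi_nth[OF assms, of "s*j"] sg_sq[OF assms(1)] by simp
  show "bnd s (ser_mult A B)" by (rule bnd_of_Phi[OF assms(1) *])
  show "Phi s (ser_mult A B) = Phi s A * Phi s B" by (rule Phi_of[OF assms(1) *])
qed

lemma Phi_eq_nth_iff: assumes "sg s" "bnd s A" shows "Phi s A = F \<longleftrightarrow> (\<forall>j. A j = F $$ (s * j))"
  using Phi_nth'[OF assms] Phi_of[OF assms(1)] by metis

lemma ser_add_Phi: assumes "sg s" "bnd s A" "bnd s B"
  shows "bnd s (ser_add A B)" "Phi s (ser_add A B) = Phi s A + Phi s B"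
proof -
  have *: "ser_add A B j = (Phi s A + Phi s B) $$ (s * j)" for j
    using Phi_nth'[OF assms(1,2)] Phi_nth'[OF assms(1,3)] by (simp add: ser_add_def)
  show "bnd s (ser_add A B)" by (rule bnd_of_Phi[OF assms(1) *])
  show "Phi s (ser_add A B) = Phi s A + Phi s B" by (rule Phi_of[OF assms(1) *])
qed

lemma ser_sub_Phi: assumes "sg s" "bnd s A" "bnd s B"
  shows "bnd s (ser_sub A B)" "Phi s (ser_sub A B) = Phi s A - Phi s B"
proof -
  have *: "ser_sub A B j = (Phi s A - Phi s B) $$ (s * j)" for j
    using Phi_nth'[OF assms(1,2)] Phi_nth'[OF assms(1,3)] by (simp add: ser_sub_def)
  show "bnd s (ser_sub A B)" by (rule bnd_of_Phi[OF assms(1) *])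
  show "Phi s (ser_sub A B) = Phi s A - Phi s B" by (rule Phi_of[OF assms(1) *])
qed

lemma ser_smul_Phi: assumes "sg s" "bnd s A"
  shows "bnd s (ser_smul c A)" "Phi s (ser_smul c A) = fls_const c * Phi s A"
proof -
  have *: "ser_smul c A j = (fls_const c * Phi s A) $$ (s * j)" for j
    using Phi_nth'[OF assms(1,2)] by (simp add: ser_smul_def)
  show "bnd s (ser_smul c A)" by (rule bnd_of_Phi[OF assms(1) *])
  show "Phi s (ser_smul c A) = fls_const c * Phi s A" by (rule Phi_of[OF assms(1) *])
qed

lemma ser_const_Phi: assumes "sg s"
  shows "bnd s (ser_const c)" "Phi s (ser_const c) = fls_const c"
proof -
  have *: "ser_const c j = (fls_const c) $$ (s * j)" for j
    using assms by (auto simp: ser_const_def sg_def)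
  show "bnd s (ser_const c)" by (rule bnd_of_Phi[OF assms(1) *])
  show "Phi s (ser_const c) = fls_const c" by (rule Phi_of[OF assms(1) *])
qed

lemma ser_one_Phi: assumes "sg s"
  shows "bnd s ser_one" "Phi s ser_one = 1"
proof -
  have e: "ser_one = ser_const 1" by (auto simp: ser_one_def ser_const_def)
  show "bnd s ser_one" "Phi s ser_one = 1" unfolding e using ser_const_Phi[OF assms, of 1]
    by (auto simp: fls_const_1)
qed

lemma ser_pow_Phi: assumes "sg s" "bnd s A"
  shows "bnd s (ser_pow A n) \<and> Phi s (ser_pow A n) = Phi s A ^ n"
proof (induction n)
  case 0 then show ?case using ser_one_Phi[OF assms(1)] by simp
next
  case (Suc n) then show ?case using ser_mult_Phi[OF assms(1,2), of "ser_pow A n"] by simp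
qed

definition Dp :: "int \<Rightarrow> complex fls \<Rightarrow> complex fls" where
  "Dp s F = (if s = 1 then fls_deriv F else - (fls_X ^ 2 * fls_deriv F))"

lemma Dp_nth: "sg s \<Longrightarrow> Dp s F $$ n = of_int (s * n + 1) * F $$ (n + s)"
  by (auto simp: sg_def Dp_def fls_X_power_times_conv_shift algebra_simps)

lemma ser_dp_Phi: assumes "sg s" "bnd s A"
  shows "bnd s (ser_dp A)" "Phi s (ser_dp A) = Dp s (Phi s A)"
proof -
  have *: "ser_dp A j = (Dp s (Phi s A)) $$ (s * j)" for j
  proof -
    have "(Dp s (Phi s A)) $$ (s * j) = of_int (s * (s * j) + 1) * Phi s A $$ (s * j + s)"
      by (rule Dp_nth[OF assms(1)])
    also have "Phi s A $$ (s * j + s) = A (s * (s * j + s))" by (rule Phi_nth[OF assms])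
    also have "A (s * (s * j + s)) = A (j + 1)" using assms(1) by (auto simp: sg_def add.commute)
    also have "of_int (s * (s * j) + 1) = (of_int (j + 1) :: complex)" using assms(1) by (auto simp: sg_def)
    finally show ?thesis by (simp add: ser_dp_def)
  qed
  show "bnd s (ser_dp A)" by (rule bnd_of_Phi[OF assms(1) *])
  show "Phi s (ser_dp A) = Dp s (Phi s A)" by (rule Phi_of[OF assms(1) *])
qed

lemma Dp_add: "Dp s (F + G) = Dp s F + Dp s G"
  by (auto simp: Dp_def algebra_simps)
lemma Dp_diff: "Dp s (F - G) = Dp s F - Dp s G"
  by (auto simp: Dp_def algebra_simps)
lemma Dp_mult: "Dp s (F * G) = F * Dp s G + Dp s F * G"
  by (auto simp: Dp_def algebra_simps)
lemma Dp_const: "Dp s (fls_const c) = 0"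
  by (auto simp: Dp_def)
lemma Dp_sum: "Dp s (sum f I) = (\<Sum>i\<in>I. Dp s (f i))"
  by (auto simp: Dp_def fls_deriv_sum sum_distrib_left sum_negf)
lemma Dp_res: "sg s \<Longrightarrow> Dp s F $$ (- s) = 0"
  by (auto simp: Dp_nth sg_def)

lemma Dp_pow: "Dp s (F ^ n) = of_nat n * F ^ (n - 1) * Dp s F"
  by (auto simp: Dp_def fls_deriv_power algebra_simps)

lemma Dp_inverse: fixes F :: "complex fls" assumes "F \<noteq> 0"
  shows "Dp s (inverse F) = - (inverse F ^ 2 * Dp s F)"
proof -
  have "Dp s (F * inverse F) = 0" using assms by (simp add: Dp_def)
  hence "F * Dp s (inverse F) = - (Dp s F * inverse F)" unfolding Dp_mult by (simp add: eq_neg_iff_add_eq_0)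
  hence h: "F * Dp s (inverse F) = - (Dp s F * inverse F)" .
  have "Dp s (inverse F) = (inverse F * F) * Dp s (inverse F)" using assms by simp
  also have "\<dots> = inverse F * (F * Dp s (inverse F))" by (simp only: mult.assoc)
  also have "\<dots> = inverse F * (-(Dp s F * inverse F))" using h by simp
  also have "\<dots> = -(inverse F ^ 2 * Dp s F)" by (simp add: power2_eq_square algebra_simps)
  finally show ?thesis .
qed

definition bdd_s :: "int \<Rightarrow> ser \<Rightarrow> bool" where
  "bdd_s s B = (if s = 1 then bdd_below_ser B else bdd_above_ser B)"

lemma bdd_s_bnd: "sg s \<Longrightarrow> bdd_s s B \<longleftrightarrow> bnd s B"
proof -
  assume "sg s"
  show ?thesis
  proof (cases "s = 1")
    case True then show ?thesis by (simp add: bdd_s_def bdd_below_ser_def bnd_def)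
  next
    case False
    hence s: "s = -1" using \<open>sg s\<close> by (simp add: sg_def)
    have "(\<exists>N. \<forall>j>N. B j = 0) \<longleftrightarrow> (\<exists>N. \<forall>j. - j < N \<longrightarrow> B j = 0)"
    proof
      assume "\<exists>N. \<forall>j>N. B j = 0" then obtain N where "\<forall>j>N. B j = 0" by blast
      hence "\<forall>j. - j < - N \<longrightarrow> B j = 0" by simp
      thus "\<exists>N. \<forall>j. - j < N \<longrightarrow> B j = 0" by blast
    next
      assume "\<exists>N. \<forall>j. - j < N \<longrightarrow> B j = 0" then obtain N where "\<forall>j. - j < N \<longrightarrow> B j = 0" by blast
      hence "\<forall>j> - N. B j = 0" by simp
      thus "\<exists>N. \<forall>j>N. B j = 0" by blast
    qed
    then show ?thesis using s by (simp add: bdd_s_def bdd_above_ser_def bnd_def)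
  qed
qed

definition ser_inv :: "int \<Rightarrow> ser \<Rightarrow> ser" where
  "ser_inv s A = (THE B. bdd_s s B \<and> ser_mult A B = ser_one)"

lemma inv_up_eq: "inv_up A = ser_inv (-1) A"
  by (simp add: inv_up_def ser_inv_def bdd_s_def)
lemma inv_down_eq: "inv_down A = ser_inv 1 A"
  by (simp add: inv_down_def ser_inv_def bdd_s_def)

lemma ser_inv_Phi: assumes "sg s" "bnd s A" "Phi s A \<noteq> 0"
  shows "bnd s (ser_inv s A)" "Phi s (ser_inv s A) = inverse (Phi s A)"
proof -
  define B where "B j = inverse (Phi s A) $$ (s * j)" for j
  have bB: "bnd s B" by (rule bnd_of_Phi[OF assms(1)]) (simp add: B_def)
  have PB: "Phi s B = inverse (Phi s A)" by (rule Phi_of[OF assms(1)]) (simp add: B_def)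
  have "ser_inv s A = B"
    unfolding ser_inv_def
  proof (rule the_equality)
    show "bdd_s s B \<and> ser_mult A B = ser_one"
    proof
      show "bdd_s s B" using bB bdd_s_bnd[OF assms(1)] by simp
      have "Phi s (ser_mult A B) = Phi s ser_one"
        using ser_mult_Phi(2)[OF assms(1,2) bB] PB assms(3) ser_one_Phi[OF assms(1)] by simp
      thus "ser_mult A B = ser_one"
        using Phi_inj[OF assms(1)] ser_mult_Phi(1)[OF assms(1,2) bB] ser_one_Phi[OF assms(1)] by blast
    qed
  next
    fix C assume C: "bdd_s s C \<and> ser_mult A C = ser_one"
    hence bC: "bnd s C" using bdd_s_bnd[OF assms(1)] by simp
    have "Phi s A * Phi s C = 1"
      using C ser_mult_Phi(2)[OF assms(1,2) bC] ser_one_Phi[OF assms(1)] by simp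
    hence "Phi s C = inverse (Phi s A)" using assms(3) by (metis field_class.field_inverse mult.left_commute mult_1_right)
    thus "C = B" using Phi_inj[OF assms(1) bC bB] PB by simp
  qed
  thus "bnd s (ser_inv s A)" "Phi s (ser_inv s A) = inverse (Phi s A)" using bB PB by simp_all
qed

definition trP :: "int \<Rightarrow> complex fls \<Rightarrow> complex fls" where
  "trP s F = Abs_fls (\<lambda>j. if s * j > 0 then F $$ j else 0)"

lemma trP_nth: assumes "sg s" shows "trP s F $$ j = (if s * j > 0 then F $$ j else 0)"
proof -
  obtain N :: nat where N: "\<forall>n>N. F $$ (-int n) = 0" by (rule fls_nth_vanishes_below_natE)
  have "\<forall>n>N. (\<lambda>j. if s * j > 0 then F $$ j else 0) (-int n) = 0" using N by simp
  thus ?thesis unfolding trP_def by (intro nth_Abs_fls_ex_nat_lower_bound) blast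
qed

lemma pos_part_Phi: assumes "sg s" "bnd s A"
  shows "bnd s (pos_part A)" "Phi s (pos_part A) = trP s (Phi s A)"
proof -
  have *: "pos_part A j = trP s (Phi s A) $$ (s * j)" for j
    using Phi_nth'[OF assms, of j] trP_nth[OF assms(1), of "Phi s A" "s * j"] assms(1)
    by (auto simp: pos_part_def sg_def)
  show "bnd s (pos_part A)" by (rule bnd_of_Phi[OF assms(1) *])
  show "Phi s (pos_part A) = trP s (Phi s A)" by (rule Phi_of[OF assms(1) *])
qed

lemma nonpos_part_Phi: assumes "sg s" "bnd s A"
  shows "bnd s (nonpos_part A)" "Phi s (nonpos_part A) = Phi s A - trP s (Phi s A)"
proof -
  have *: "nonpos_part A j = (Phi s A - trP s (Phi s A)) $$ (s * j)" for j
    using Phi_nth'[OF assms, of j] trP_nth[OF assms(1), of "Phi s A" "s * j"] assms(1)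
    by (auto simp: nonpos_part_def sg_def)
  show "bnd s (nonpos_part A)" by (rule bnd_of_Phi[OF assms(1) *])
  show "Phi s (nonpos_part A) = Phi s A - trP s (Phi s A)" by (rule Phi_of[OF assms(1) *])
qed

lemma res_Phi: assumes "sg s" "bnd s A" shows "A (-1) = Phi s A $$ (- s)"
  using Phi_nth'[OF assms, of "-1"] by simp



definition hasd :: "(complex \<Rightarrow> complex fls) \<Rightarrow> complex fls \<Rightarrow> complex \<Rightarrow> bool" where
  "hasd A A' s0 \<longleftrightarrow> (\<forall>n. ((\<lambda>s. A s $$ n) has_field_derivative A' $$ n) (at s0))"

definition ulb :: "int \<Rightarrow> (complex \<Rightarrow> complex fls) \<Rightarrow> bool" where
  "ulb c A \<longleftrightarrow> (\<forall>s. lbf c (A s))"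

lemma ulb_mono: "ulb c A \<Longrightarrow> b \<le> c \<Longrightarrow> ulb b A"
  by (auto simp: ulb_def lbf_def)

lemma hasd_unique: "hasd A A1 s0 \<Longrightarrow> hasd A A2 s0 \<Longrightarrow> A1 = A2"
  unfolding hasd_def by (intro fls_eqI) (metis DERIV_unique)

lemma hasd_lbf: assumes "ulb c A" "hasd A A' s0" shows "lbf c A'"
  unfolding lbf_def
proof (intro allI impI)
  fix n assume "n < c"
  hence "(\<lambda>s. A s $$ n) = (\<lambda>s. 0)" using assms(1) by (auto simp: ulb_def lbf_def)
  hence "((\<lambda>s. A s $$ n) has_field_derivative 0) (at s0)" by simp
  thus "A' $$ n = 0" using assms(2) unfolding hasd_def by (metis DERIV_unique)
qed

lemma hasd_deriv: "hasd A A' s0 \<Longrightarrow> deriv (\<lambda>s. A s $$ n) s0 = A' $$ n"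
  unfolding hasd_def by (metis DERIV_imp_deriv)

lemma hasd_const: "hasd (\<lambda>s. F) 0 s0"
  by (simp add: hasd_def)

lemma hasd_add: "hasd A A' s0 \<Longrightarrow> hasd B B' s0 \<Longrightarrow> hasd (\<lambda>s. A s + B s) (A' + B') s0"
  unfolding hasd_def by (auto intro: derivative_intros)

lemma hasd_diff: "hasd A A' s0 \<Longrightarrow> hasd B B' s0 \<Longrightarrow> hasd (\<lambda>s. A s - B s) (A' - B') s0"
  unfolding hasd_def by (auto intro: derivative_intros)

lemma hasd_sum: "(\<And>x. x \<in> S \<Longrightarrow> hasd (A x) (A' x) s0) \<Longrightarrow> hasd (\<lambda>s. \<Sum>x\<in>S. A x s) (\<Sum>x\<in>S. A' x) s0"
proof (induction S rule: infinite_finite_induct)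
  case (infinite A) then show ?case by (simp add: hasd_const)
next
  case empty then show ?case by (simp add: hasd_const)
next
  case (insert x F) then show ?case by (simp add: hasd_add)
qed

lemma hasd_cmult: assumes "((\<lambda>s. c s) has_field_derivative c') (at s0)" "hasd A A' s0"
  shows "hasd (\<lambda>s. fls_const (c s) * A s) (fls_const c' * A s0 + fls_const (c s0) * A') s0"
  using assms unfolding hasd_def by (auto intro!: derivative_eq_intros)

lemma ulb_cmult: "ulb a A \<Longrightarrow> ulb a (\<lambda>s. fls_const (c s) * A s)"
  by (auto simp: ulb_def lbf_def)

lemma hasd_mult: assumes "ulb a A" "ulb b B" "hasd A A' s0" "hasd B B' s0"
  shows "hasd (\<lambda>s. A s * B s) (A' * B s0 + A s0 * B') s0"
  unfolding hasd_def
proof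
  fix n
  have la: "lbf a A'" by (rule hasd_lbf[OF assms(1,3)])
  have lb: "lbf b B'" by (rule hasd_lbf[OF assms(2,4)])
  have e: "(\<lambda>s. (A s * B s) $$ n) = (\<lambda>s. \<Sum>i=a..n-b. A s $$ i * B s $$ (n - i))"
    using assms(1,2) by (auto simp: ulb_def times_nth_lb)
  have "((\<lambda>s. \<Sum>i=a..n-b. A s $$ i * B s $$ (n - i)) has_field_derivative
         (\<Sum>i=a..n-b. A' $$ i * B s0 $$ (n - i) + A s0 $$ i * B' $$ (n - i))) (at s0)"
    using assms(3,4) unfolding hasd_def by (auto intro!: derivative_eq_intros simp: mult.commute)
  moreover have "(\<Sum>i=a..n-b. A' $$ i * B s0 $$ (n - i) + A s0 $$ i * B' $$ (n - i))
      = (A' * B s0 + A s0 * B') $$ n"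
    using assms(1,2) la lb by (simp add: ulb_def sum.distrib times_nth_lb[of a A' b "B s0"] times_nth_lb[of a "A s0" b B'])
  ultimately show "((\<lambda>s. (A s * B s) $$ n) has_field_derivative (A' * B s0 + A s0 * B') $$ n) (at s0)"
    unfolding e by simp
qed

lemma ulb_mult: "ulb a A \<Longrightarrow> ulb b B \<Longrightarrow> ulb (a + b) (\<lambda>s. A s * B s)"
  by (auto simp: ulb_def lbf_times)

lemma ulb_pow: "ulb a A \<Longrightarrow> ulb (int n * a) (\<lambda>s. A s ^ n)"
proof (induction n)
  case 0 then show ?case by (auto simp: ulb_def lbf_def)
next
  case (Suc n)
  then have "ulb (a + int n * a) (\<lambda>s. A s * A s ^ n)" using ulb_mult by blast
  then show ?case by (simp add: algebra_simps)
qed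

lemma hasd_pow: assumes "ulb a A" "hasd A A' s0"
  shows "hasd (\<lambda>s. A s ^ n) (of_nat n * A s0 ^ (n - 1) * A') s0"
proof (induction n)
  case 0 then show ?case by (simp add: hasd_const)
next
  case (Suc n)
  have "hasd (\<lambda>s. A s * A s ^ n) (A' * A s0 ^ n + A s0 * (of_nat n * A s0 ^ (n - 1) * A')) s0"
    by (rule hasd_mult[OF assms(1) ulb_pow[OF assms(1)] assms(2) Suc])
  moreover have "A' * A s0 ^ n + A s0 * (of_nat n * A s0 ^ (n - 1) * A') = of_nat (Suc n) * A s0 ^ n * A'"
    by (cases n) (auto simp: algebra_simps)
  ultimately show ?case by simp
qed

lemma lbf_subdeg: assumes "lbf d F" "F $$ d \<noteq> 0" shows "fls_subdegree F = d"
  using assms by (intro fls_subdegree_eqI) (auto simp: lbf_def)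

lemma lbf_inverse: fixes F :: "complex fls" assumes "lbf d F" "F $$ d \<noteq> 0"
  shows "lbf (-d) (inverse F)"
  using lbf_subdeg[OF assms] by (auto simp: lbf_def)

lemma hasd_inverse:
  assumes ul: "ulb d A" and nz: "\<forall>s. A s $$ d \<noteq> 0" and hd: "hasd A A' s0"
  shows "ulb (-d) (\<lambda>s. inverse (A s))" "hasd (\<lambda>s. inverse (A s)) (-(inverse (A s0) ^ 2 * A')) s0"
proof -
  define B where "B s = inverse (A s)" for s
  have lB: "lbf (-d) (B s)" for s unfolding B_def
    by (rule lbf_inverse) (use ul nz in \<open>auto simp: ulb_def\<close>)
  show ub: "ulb (-d) (\<lambda>s. inverse (A s))" using lB by (simp add: ulb_def B_def)
  have Anz: "A s \<noteq> 0" for s using nz by (metis fls_zero_nth)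
  have AB: "A s * B s = 1" for s using Anz by (simp add: B_def)
  have dA: "(\<lambda>s. A s $$ i) field_differentiable at s0" for i
    using hd unfolding hasd_def field_differentiable_def by blast
  have key: "(\<lambda>s. B s $$ (int n - d)) field_differentiable at s0" for n :: nat
  proof (induction n rule: less_induct)
    case (less n)
    have eq: "B s $$ (int n - d) = ((1::complex fls) $$ int n
              - (\<Sum>i\<in>{d+1..int n+d}. A s $$ i * B s $$ (int n - i))) / A s $$ d" for s
    proof -
      have "(1::complex fls) $$ int n = (A s * B s) $$ int n" by (simp add: AB)
      also have "\<dots> = (\<Sum>i=d..int n - (-d). A s $$ i * B s $$ (int n - i))"
        by (rule times_nth_lb) (use ul lB in \<open>auto simp: ulb_def\<close>)
      also have "{d..int n - (-d)} = insert d {d+1..int n+d}" by auto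
      also have "(\<Sum>i\<in>insert d {d+1..int n+d}. A s $$ i * B s $$ (int n - i))
           = A s $$ d * B s $$ (int n - d) + (\<Sum>i\<in>{d+1..int n+d}. A s $$ i * B s $$ (int n - i))"
        by (subst sum.insert) auto
      finally show ?thesis using nz by (auto simp: field_simps)
    qed
    have "(\<lambda>s. B s $$ (int n - i)) field_differentiable at s0" if "i \<in> {d+1..int n+d}" for i
    proof -
      define k where "k = nat (int n + d - i)"
      have k: "k < n" "int n - i = int k - d" using that by (auto simp: k_def)
      show ?thesis using less[OF k(1)] k(2) by simp
    qed
    hence "(\<lambda>s. ((1::complex fls) $$ int n
              - (\<Sum>i\<in>{d+1..int n+d}. A s $$ i * B s $$ (int n - i))) / A s $$ d) field_differentiable at s0"
      using nz dA by (auto intro!: derivative_intros)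
    then show ?case unfolding eq .
  qed
  have dB: "(\<lambda>s. B s $$ j) field_differentiable at s0" for j
  proof (cases "j < -d")
    case True
    hence "(\<lambda>s. B s $$ j) = (\<lambda>s. 0)" using lB by (auto simp: lbf_def)
    then show ?thesis by simp
  next
    case False
    hence "j = int (nat (j + d)) - d" by simp
    then show ?thesis using key[of "nat (j + d)"] by metis
  qed
  define B' where "B' = Abs_fls (\<lambda>j. deriv (\<lambda>s. B s $$ j) s0)"
  have "\<forall>j < -d. deriv (\<lambda>s. B s $$ j) s0 = 0"
  proof (intro allI impI)
    fix j assume "j < -d"
    hence "(\<lambda>s. B s $$ j) = (\<lambda>s. 0)" using lB by (auto simp: lbf_def)
    thus "deriv (\<lambda>s. B s $$ j) s0 = 0" by simp
  qed
  hence B'n: "B' $$ j = deriv (\<lambda>s. B s $$ j) s0" for j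
    unfolding B'_def by (intro nth_Abs_fls_lower_bound) blast
  have hB: "hasd B B' s0" unfolding hasd_def B'n
    using dB by (simp add: DERIV_deriv_iff_field_differentiable)
  have "hasd (\<lambda>s. A s * B s) (A' * B s0 + A s0 * B') s0"
    by (rule hasd_mult[OF ul _ hd hB, of "-d"]) (use lB in \<open>simp add: ulb_def\<close>)
  moreover have "hasd (\<lambda>s. A s * B s) 0 s0" unfolding AB by (rule hasd_const)
  ultimately have "A' * B s0 + A s0 * B' = 0" by (rule hasd_unique)
  hence "B' = - (inverse (A s0) ^ 2 * A')"
    using Anz[of s0] unfolding B_def
    by (simp add: power2_eq_square field_simps add_eq_0_iff2)
  then show "hasd (\<lambda>s. inverse (A s)) (-(inverse (A s0) ^ 2 * A')) s0"
    using hB unfolding B_def by simp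
qed

lemma hasd_powi:
  assumes ul: "ulb d A" and nz: "\<forall>s. A s $$ d \<noteq> 0" and hd: "hasd A A' s0"
  shows "ulb (e * d) (\<lambda>s. A s powi e)" "hasd (\<lambda>s. A s powi e) (of_int e * A s0 powi (e - 1) * A') s0"
proof -
  have Anz: "A s0 \<noteq> 0" using nz by (metis fls_zero_nth)
  show "ulb (e * d) (\<lambda>s. A s powi e)"
  proof (cases "e \<ge> 0")
    case True
    then show ?thesis using ulb_pow[OF ul, of "nat e"] by (simp add: power_int_def)
  next
    case False
    have "ulb (int (nat (-e)) * (-d)) (\<lambda>s. inverse (A s) ^ nat (-e))"
      by (rule ulb_pow[OF hasd_inverse(1)[OF ul nz hd]])
    then show ?thesis using False by (simp add: power_int_def)
  qed
  show "hasd (\<lambda>s. A s powi e) (of_int e * A s0 powi (e - 1) * A') s0"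
  proof (cases "e \<ge> 0")
    case True
    have h: "hasd (\<lambda>s. A s ^ nat e) (of_nat (nat e) * A s0 ^ (nat e - 1) * A') s0"
      by (rule hasd_pow[OF ul hd])
    have eq: "of_nat (nat e) * A s0 ^ (nat e - 1) * A' = of_int e * A s0 powi (e - 1) * A'"
    proof (cases "e = 0")
      case True then show ?thesis by simp
    next
      case False
      hence "e - 1 \<ge> 0" "nat (e - 1) = nat e - 1" using True by auto
      then show ?thesis using True by (simp add: power_int_def)
    qed
    have e1: "(\<lambda>s. A s powi e) = (\<lambda>s. A s ^ nat e)" using True by (simp add: power_int_nonneg_exp)
    show ?thesis using h unfolding eq e1 .
  next
    case False
    define n where "n = nat (-e)"
    have n: "n \<ge> 1" "e = - int n" using False by (auto simp: n_def)
    have h: "hasd (\<lambda>s. inverse (A s) ^ n) (of_nat n * inverse (A s0) ^ (n - 1) * (-(inverse (A s0) ^ 2 * A'))) s0"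
      by (rule hasd_pow[OF hasd_inverse(1,2)[OF ul nz hd]])
    have eq: "of_nat n * inverse (A s0) ^ (n - 1) * (-(inverse (A s0) ^ 2 * A'))
        = of_int e * A s0 powi (e - 1) * A'"
    proof -
      have "A s0 powi (e - 1) = inverse (A s0) ^ (n + 1)" using n by (simp add: power_int_def nat_add_distrib)
      moreover have "inverse (A s0) ^ (n + 1) = inverse (A s0) ^ (n - 1) * inverse (A s0) ^ 2"
        using n(1) by (simp add: power_add[symmetric])
      ultimately show ?thesis using n by (simp add: algebra_simps)
    qed
    have e1: "(\<lambda>s. A s powi e) = (\<lambda>s. inverse (A s) ^ n)" using n by (simp add: power_int_def)
    show ?thesis using h unfolding eq e1 .
  qed
qed

lemma Dp_powi: fixes F :: "complex fls" assumes "F \<noteq> 0"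
  shows "Dp s (F powi e) = of_int e * F powi (e - 1) * Dp s F"
proof (cases "e \<ge> 0")
  case True
  then show ?thesis
  proof (cases "e = 0")
    case False
    hence "nat (e - 1) = nat e - 1" "e - 1 \<ge> 0" using True by auto
    then show ?thesis using True by (simp add: power_int_def Dp_pow)
  qed (simp add: Dp_const[of s 1, simplified fls_const_1])
next
  case False
  define n where "n = nat (-e)"
  have n: "n \<ge> 1" "e = - int n" using False by (auto simp: n_def)
  have "Dp s (inverse F ^ n) = of_nat n * inverse F ^ (n - 1) * (-(inverse F ^ 2 * Dp s F))"
    by (simp add: Dp_pow Dp_inverse[OF assms])
  moreover have "inverse F ^ (n + 1) = inverse F ^ (n - 1) * inverse F ^ 2"
    using n(1) by (simp add: power_add[symmetric])
  ultimately show ?thesis using n by (simp add: power_int_def nat_add_distrib algebra_simps)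
qed

lemma lbf_Dp: assumes "sg s" "lbf c F" shows "lbf (c - 1) (Dp s F)"
  using assms by (auto simp: lbf_def Dp_nth sg_def)

lemma lbf_add: "lbf a F \<Longrightarrow> lbf b G \<Longrightarrow> lbf (min a b) (F + G)"
  by (auto simp: lbf_def)
lemma lbf_diff: "lbf a F \<Longrightarrow> lbf b G \<Longrightarrow> lbf (min a b) (F - G)"
  by (auto simp: lbf_def)
lemma lbf_uminus: "lbf a F \<Longrightarrow> lbf a (- F)"
  by (auto simp: lbf_def)

lemma res_powi_Dp:
  fixes F :: "complex fls"
  assumes s: "sg s" and l: "lbf (-1) F" "F $$ (-1) \<noteq> 0"
  shows "(F powi a * Dp s F) $$ (- s) = (if a = -1 then - of_int s else 0)"
proof -
  have Fnz: "F \<noteq> 0" using l(2) by (metis fls_zero_nth)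
  have sd: "fls_subdegree F = -1" by (rule lbf_subdeg[OF l])
  show ?thesis
  proof (cases "a = -1")
    case True
    have "(inverse F * Dp s F) $$ (- s) = - of_int s"
    proof (cases "s = 1")
      case True
      then show ?thesis using fls_residue_deriv_times_inverse_eq_subdegree(2)[of F] sd
        by (simp add: Dp_def)
    next
      case False
      hence s1: "s = -1" using s by (simp add: sg_def)
      have "(inverse F * Dp s F) = - (fls_X ^ 2 * (inverse F * fls_deriv F))"
        using s1 by (simp add: Dp_def algebra_simps)
      hence "(inverse F * Dp s F) $$ 1 = - ((inverse F * fls_deriv F) $$ (-1))"
        by (simp add: fls_X_power_times_conv_shift)
      then show ?thesis using fls_residue_deriv_times_inverse_eq_subdegree(2)[of F] sd s1
        by simp
    qed
    then show ?thesis using True by simp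
  next
    case False
    have "Dp s (F powi (a + 1)) = of_int (a + 1) * (F powi a * Dp s F)"
      using Dp_powi[OF Fnz, of s "a + 1"] by simp
    define c :: complex where "c = of_int (a + 1)"
    have c: "c \<noteq> 0" unfolding c_def of_int_eq_0_iff using False by simp
    have oc: "(of_int (a + 1) :: complex fls) = fls_const c" by (simp add: c_def fls_of_int)
    have "fls_const (inverse c) * Dp s (F powi (a + 1))
        = (fls_const (inverse c) * fls_const c) * (F powi a * Dp s F)"
      unfolding \<open>Dp s (F powi (a + 1)) = _\<close> oc by (simp only: mult.assoc)
    also have "\<dots> = F powi a * Dp s F" using c by (simp add: fls_const_1)
    finally have "(F powi a * Dp s F) = fls_const (inverse c) * Dp s (F powi (a + 1))" by simp
    moreover have "Dp s (F powi (a + 1)) $$ (- s) = 0" by (rule Dp_res[OF s])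
    ultimately show ?thesis using False by simp
  qed
qed



lemma lbf_pow_const: "lbf a F \<Longrightarrow> lbf (int n * a) (F ^ n)"
  using ulb_pow[of a "\<lambda>_. F" n] by (simp add: ulb_def)

lemma key_alg:
  fixes l lq lz hp hz Nq Nz N Zq Zz W :: "complex fls"
  assumes s: "sg s"
    and E1: "lq = hp * lz - hz * Dp s l"
    and E2: "Nq = hp * Nz - hz * Dp s N"
    and E3: "Dp s l * Nz - lz * Dp s N = 1"
    and d1: "lbf T (Nq - (Zq + W * lq))"
    and d2: "lbf T (Nz - (Zz + W * lz))"
    and d4: "lbf (T - 1) (Dp s N - W * Dp s l)"
    and ll: "lbf (-1) l"
    and bh: "lbf cH hp" "lbf cH hz" "lbf cH lz" "lbf cH (Dp s l)" "cH \<le> 0"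
    and T: "T > int m + 2 - 2 * cH"
  shows "(l ^ m * (Dp s l * Zq)) $$ (- s) = (l ^ m * hp) $$ (- s)"
proof -
  define \<delta>1 where "\<delta>1 = Nq - (Zq + W * lq)"
  define \<delta>2 where "\<delta>2 = Nz - (Zz + W * lz)"
  define \<delta>4 where "\<delta>4 = Dp s N - W * Dp s l"
  define U where "U = cH + T - 1"
  have a1: "lbf U (- \<delta>1)" using lbf_uminus[OF lbf_mono[OF d1, of U]] bh(5) unfolding \<delta>1_def U_def by simp
  have a2: "lbf U (hp * \<delta>2)" using lbf_times[OF bh(1) lbf_mono[OF d2, of "T - 1"]] unfolding \<delta>2_def U_def
    by (simp add: algebra_simps)
  have a3: "lbf U (hz * \<delta>4)" using lbf_times[OF bh(2) d4] unfolding \<delta>4_def U_def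
    by (simp add: algebra_simps)
  have e1: "lbf U (- \<delta>1 + hp * \<delta>2 - hz * \<delta>4)"
    using lbf_diff[OF lbf_add[OF a1 a2] a3] by simp
  have b1: "lbf U (Dp s l * \<delta>2)" using lbf_times[OF bh(4) lbf_mono[OF d2, of "T - 1"]] unfolding \<delta>2_def U_def
    by (simp add: algebra_simps)
  have b2: "lbf U (lz * \<delta>4)" using lbf_times[OF bh(3) d4] unfolding \<delta>4_def U_def
    by (simp add: algebra_simps)
  have e2: "lbf U (Dp s l * \<delta>2 - lz * \<delta>4)" using lbf_diff[OF b1 b2] by simp
  define E where "E = Dp s l * (- \<delta>1 + hp * \<delta>2 - hz * \<delta>4) - hp * (Dp s l * \<delta>2 - lz * \<delta>4)"
  have lE: "lbf (cH + U) E"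
    using lbf_diff[OF lbf_times[OF bh(4) e1] lbf_times[OF bh(1) e2]] unfolding E_def by simp
  have x1: "- \<delta>1 + hp * \<delta>2 - hz * \<delta>4 = (Zq - hp * Zz) + (hp * Nz - hz * Dp s N - Nq)
       + W * (lq - (hp * lz - hz * Dp s l))"
    unfolding \<delta>1_def \<delta>2_def \<delta>4_def by (simp add: algebra_simps)
  have x2: "Dp s l * \<delta>2 - lz * \<delta>4 = (Dp s l * Nz - lz * Dp s N) - Dp s l * Zz"
    unfolding \<delta>2_def \<delta>4_def by (simp add: algebra_simps)
  have "E = Dp s l * (Zq - hp * Zz) - hp * (1 - Dp s l * Zz)"
    unfolding E_def x1 x2 using E1 E2 E3 by simp
  also have "\<dots> = Dp s l * Zq - hp" by (simp add: algebra_simps)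
  finally have Eeq: "E = Dp s l * Zq - hp" .
  have lm: "lbf (int m * (-1)) (l ^ m)" by (rule lbf_pow_const[OF ll])
  have "lbf (int m * (-1) + (cH + U)) (l ^ m * E)" by (rule lbf_times[OF lm lE])
  moreover have "- s < int m * (-1) + (cH + U)" using T s by (auto simp: U_def sg_def)
  ultimately have "(l ^ m * E) $$ (- s) = 0" by (auto simp: lbf_def)
  thus ?thesis unfolding Eeq by (simp add: algebra_simps)
qed

definition ubnd :: "int \<Rightarrow> nat \<times> nat \<Rightarrow> times \<Rightarrow> fam \<Rightarrow> bool" where
  "ubnd s q t K \<longleftrightarrow> (\<exists>N. \<forall>s' j. s * j < N \<longrightarrow> K (t(q := s')) j = 0)"

lemma ubnd_bnd: "ubnd s q t K \<Longrightarrow> bnd s (K (t(q := s')))"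
  by (auto simp: ubnd_def bnd_def)

lemma ubnd_bnd0: "ubnd s q t K \<Longrightarrow> bnd s (K t)"
  using ubnd_bnd[of s q t K "t q"] by simp

lemma ubnd_ulb: assumes "sg s" "ubnd s q t K" shows "\<exists>c. ulb c (\<lambda>s'. Phi s (K (t(q := s'))))"
proof -
  from assms(2) obtain N where N: "\<forall>s' j. s * j < N \<longrightarrow> K (t(q := s')) j = 0" by (auto simp: ubnd_def)
  have "ulb N (\<lambda>s'. Phi s (K (t(q := s'))))"
    unfolding ulb_def lbf_def
  proof (intro allI impI)
    fix s' and j :: int assume "j < N"
    have "Phi s (K (t(q := s'))) $$ j = K (t(q := s')) (s * j)" by (rule Phi_nth[OF assms(1) ubnd_bnd[OF assms(2)]])
    also have "\<dots> = 0" using N \<open>j < N\<close> sg_sq[OF assms(1)] by metis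
    finally show "Phi s (K (t(q := s'))) $$ j = 0" .
  qed
  thus ?thesis by blast
qed

lemma fam_pdt_bnd: assumes "sg s" "ubnd s q t K"
  shows "bnd s (fam_pdt q K t)"
    "\<And>n. Phi s (fam_pdt q K t) $$ n = deriv (\<lambda>s'. Phi s (K (t(q := s'))) $$ n) (t q)"
proof -
  from assms(2) obtain N where N: "\<forall>s' j. s * j < N \<longrightarrow> K (t(q := s')) j = 0" by (auto simp: ubnd_def)
  have "\<forall>j. s * j < N \<longrightarrow> fam_pdt q K t j = 0"
  proof (intro allI impI)
    fix j assume "s * j < N"
    hence "(\<lambda>s'. K (t(q := s')) j) = (\<lambda>_. 0)" using N by auto
    thus "fam_pdt q K t j = 0" by (simp add: fam_pdt_def pdt_def)
  qed
  thus b: "bnd s (fam_pdt q K t)" by (auto simp: bnd_def)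
  fix n
  have "Phi s (fam_pdt q K t) $$ n = fam_pdt q K t (s * n)" by (rule Phi_nth[OF assms(1) b])
  also have "\<dots> = deriv (\<lambda>s'. K (t(q := s')) (s * n)) (t q)" by (simp add: fam_pdt_def pdt_def)
  also have "(\<lambda>s'. K (t(q := s')) (s * n)) = (\<lambda>s'. Phi s (K (t(q := s'))) $$ n)"
    using Phi_nth[OF assms(1) ubnd_bnd[OF assms(2)]] by simp
  finally show "Phi s (fam_pdt q K t) $$ n = deriv (\<lambda>s'. Phi s (K (t(q := s'))) $$ n) (t q)" .
qed

lemma line_hasd: assumes "sg s" "ubnd s q t K"
    "\<forall>j. (\<lambda>s'. K (t(q := s')) j) field_differentiable at (t q)"
  shows "hasd (\<lambda>s'. Phi s (K (t(q := s')))) (Phi s (fam_pdt q K t)) (t q)"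
  unfolding hasd_def
proof
  fix n
  have e: "(\<lambda>s'. Phi s (K (t(q := s'))) $$ n) = (\<lambda>s'. K (t(q := s')) (s * n))"
    using Phi_nth[OF assms(1) ubnd_bnd[OF assms(2)]] by simp
  have "(\<lambda>s'. Phi s (K (t(q := s'))) $$ n) field_differentiable at (t q)" unfolding e using assms(3) by blast
  thus "((\<lambda>s'. Phi s (K (t(q := s'))) $$ n) has_field_derivative Phi s (fam_pdt q K t) $$ n) (at (t q))"
    unfolding fam_pdt_bnd(2)[OF assms(1,2)] by (simp add: DERIV_deriv_iff_field_differentiable)
qed

lemma lax_fam_pdt: assumes "\<forall>j. ((\<lambda>s'. K (t(q := s')) j) has_field_derivative P j) (at (t q))"
  shows "fam_pdt q K t = P"
  using assms unfolding fam_pdt_def pdt_def by (intro ext) (simp add: DERIV_imp_deriv)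

lemma pbr_Phi: assumes "sg s" "bnd s (A t)" "bnd s (B t)" "bnd s (fam_pdt (1,0) A t)" "bnd s (fam_pdt (1,0) B t)"
  shows "bnd s (pbr A B t)"
    "Phi s (pbr A B t) = Dp s (Phi s (A t)) * Phi s (fam_pdt (1,0) B t) - Phi s (fam_pdt (1,0) A t) * Dp s (Phi s (B t))"
proof -
  have d1: "bnd s (ser_dp (A t))" "Phi s (ser_dp (A t)) = Dp s (Phi s (A t))" using ser_dp_Phi[OF assms(1,2)] by auto
  have d2: "bnd s (ser_dp (B t))" "Phi s (ser_dp (B t)) = Dp s (Phi s (B t))" using ser_dp_Phi[OF assms(1,3)] by auto
  note m1 = ser_mult_Phi[OF assms(1) d1(1) assms(5)]
  note m2 = ser_mult_Phi[OF assms(1) assms(4) d2(1)]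
  note sb = ser_sub_Phi[OF assms(1) m1(1) m2(1)]
  show "bnd s (pbr A B t)" using sb(1) by (simp add: pbr_def)
  show "Phi s (pbr A B t) = Dp s (Phi s (A t)) * Phi s (fam_pdt (1,0) B t) - Phi s (fam_pdt (1,0) A t) * Dp s (Phi s (B t))"
    using sb(2) m1(2) m2(2) d1(2) d2(2) by (simp add: pbr_def)
qed

lemma fls_sum_nth: "(sum F S) $$ n = (\<Sum>x\<in>S. F x $$ n)"
  by (induction S rule: infinite_finite_induct) auto

lemma key_ser:
  fixes s :: int and K N H :: fam and t :: times and q :: "nat \<times> nat" and S :: "'i set"
    and c :: "'i \<Rightarrow> times \<Rightarrow> complex" and e :: "'i \<Rightarrow> int" and T cH :: int and m :: nat
  assumes s: "sg s"
   and Kq: "ubnd s q t K" and Kz: "ubnd s (1,0) t K"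
   and Klq: "\<forall>s'. lbf (-1) (Phi s (K (t(q:=s')))) \<and> Phi s (K (t(q:=s'))) $$ (-1) \<noteq> 0"
   and Klz: "\<forall>s'. lbf (-1) (Phi s (K (t((1,0):=s')))) \<and> Phi s (K (t((1,0):=s'))) $$ (-1) \<noteq> 0"
   and Kdq: "\<forall>j. (\<lambda>s'. K (t(q:=s')) j) field_differentiable at (t q)"
   and Kdz: "\<forall>j. (\<lambda>s'. K (t((1,0):=s')) j) field_differentiable at (t (1,0))"
   and Hb: "bnd s (H t)" "ubnd s (1,0) t H" "lbf cH (Dp s (Phi s (H t)))"
           "lbf cH (Phi s (fam_pdt (1,0) H t))" "cH \<le> -2"
   and Nq: "ubnd s q t N" and Nz: "ubnd s (1,0) t N"
   and laxK: "\<forall>j. ((\<lambda>s'. K (t(q:=s')) j) has_field_derivative pbr H K t j) (at (t q))"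
   and laxN: "\<forall>j. ((\<lambda>s'. N (t(q:=s')) j) has_field_derivative pbr H N t j) (at (t q))"
   and canon: "pbr K N t = ser_one"
   and S: "finite S"
   and cdq: "\<forall>x\<in>S. (\<lambda>s'. c x (t(q:=s'))) field_differentiable at (t q)"
   and cdz: "\<forall>x\<in>S. (\<lambda>s'. c x (t((1,0):=s'))) field_differentiable at (t (1,0))"
   and trq: "\<forall>s' n. n < T \<longrightarrow> Phi s (N (t(q:=s'))) $$ n
              = (\<Sum>x\<in>S. fls_const (c x (t(q:=s'))) * Phi s (K (t(q:=s'))) powi e x) $$ n"
   and trz: "\<forall>s' n. n < T \<longrightarrow> Phi s (N (t((1,0):=s'))) $$ n
              = (\<Sum>x\<in>S. fls_const (c x (t((1,0):=s'))) * Phi s (K (t((1,0):=s'))) powi e x) $$ n"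
   and T: "T > int m + 2 - 2 * cH"
  shows "- of_int s * (\<Sum>x\<in>{x\<in>S. e x = - int m - 1}. pdt q (c x) t)
         = (Phi s (K t) ^ m * Dp s (Phi s (H t))) $$ (- s)"
proof -
  define l where "l = Phi s (K t)"
  define lq where "lq = Phi s (fam_pdt q K t)"
  define lz where "lz = Phi s (fam_pdt (1,0) K t)"
  define hp where "hp = Dp s (Phi s (H t))"
  define hz where "hz = Phi s (fam_pdt (1,0) H t)"
  define NN where "NN = Phi s (N t)"
  define Nq' where "Nq' = Phi s (fam_pdt q N t)"
  define Nz' where "Nz' = Phi s (fam_pdt (1,0) N t)"
  define Zq where "Zq = (\<Sum>x\<in>S. fls_const (pdt q (c x) t) * l powi e x)"
  define Zz where "Zz = (\<Sum>x\<in>S. fls_const (pdt (1,0) (c x) t) * l powi e x)"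
  define W where "W = (\<Sum>x\<in>S. fls_const (c x t) * (of_int (e x) * l powi (e x - 1)))"
  have tq: "t(q := t q) = t" "t((1,0) := t (1,0)) = t" by auto
  have lnz: "l \<noteq> 0" using Klq[rule_format, of "t q"] unfolding l_def tq by (metis fls_zero_nth)
  have ll: "lbf (-1) l" using Klq[rule_format, of "t q"] unfolding l_def tq by simp
  have l_nth: "l $$ (-1) \<noteq> 0" using Klq[rule_format, of "t q"] unfolding l_def tq by simp
  have Fder: "hasd (\<lambda>s'. \<Sum>x\<in>S. fls_const (c x (t(p:=s'))) * Phi s (K (t(p:=s'))) powi e x)
               ((\<Sum>x\<in>S. fls_const (pdt p (c x) t) * l powi e x) + W * Phi s (fam_pdt p K t)) (t p)"
    if Kp: "ubnd s p t K" and Klp: "\<forall>s'. lbf (-1) (Phi s (K (t(p:=s')))) \<and> Phi s (K (t(p:=s'))) $$ (-1) \<noteq> 0"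
      and Kdp: "\<forall>j. (\<lambda>s'. K (t(p:=s')) j) field_differentiable at (t p)"
      and cdp: "\<forall>x\<in>S. (\<lambda>s'. c x (t(p:=s'))) field_differentiable at (t p)" for p
  proof -
    define A where "A s' = Phi s (K (t(p:=s')))" for s'
    have tp: "t(p := t p) = t" by simp
    have A0: "A (t p) = l" unfolding A_def l_def tp ..
    have ulA: "ulb (-1) A" using Klp by (simp add: ulb_def A_def)
    have nzA: "\<forall>s'. A s' $$ (-1) \<noteq> 0" using Klp by (simp add: A_def)
    have hA: "hasd A (Phi s (fam_pdt p K t)) (t p)" unfolding A_def by (rule line_hasd[OF s Kp Kdp])
    have "hasd (\<lambda>s'. \<Sum>x\<in>S. fls_const (c x (t(p:=s'))) * A s' powi e x)
       (\<Sum>x\<in>S. fls_const (pdt p (c x) t) * A (t p) powi e x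
          + fls_const (c x (t(p := t p))) * (of_int (e x) * A (t p) powi (e x - 1) * Phi s (fam_pdt p K t))) (t p)"
    proof (rule hasd_sum)
      fix x assume x: "x \<in> S"
      have "((\<lambda>s'. c x (t(p:=s'))) has_field_derivative pdt p (c x) t) (at (t p))"
        using cdp x by (simp add: pdt_def DERIV_deriv_iff_field_differentiable)
      thus "hasd (\<lambda>s'. fls_const (c x (t(p:=s'))) * A s' powi e x)
            (fls_const (pdt p (c x) t) * A (t p) powi e x
          + fls_const (c x (t(p := t p))) * (of_int (e x) * A (t p) powi (e x - 1) * Phi s (fam_pdt p K t))) (t p)"
        by (rule hasd_cmult[OF _ hasd_powi(2)[OF ulA nzA hA]])
    qed
    moreover have "(\<Sum>x\<in>S. fls_const (pdt p (c x) t) * A (t p) powi e x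
          + fls_const (c x (t(p := t p))) * (of_int (e x) * A (t p) powi (e x - 1) * Phi s (fam_pdt p K t)))
        = (\<Sum>x\<in>S. fls_const (pdt p (c x) t) * l powi e x) + W * Phi s (fam_pdt p K t)"
      unfolding A0 tp W_def sum.distrib sum_distrib_right by (simp add: mult.assoc)
    ultimately show ?thesis unfolding A_def by simp
  qed
  have Fq: "hasd (\<lambda>s'. \<Sum>x\<in>S. fls_const (c x (t(q:=s'))) * Phi s (K (t(q:=s'))) powi e x) (Zq + W * lq) (t q)"
    using Fder[OF Kq Klq Kdq cdq] unfolding Zq_def lq_def .
  have Fz: "hasd (\<lambda>s'. \<Sum>x\<in>S. fls_const (c x (t((1,0):=s'))) * Phi s (K (t((1,0):=s'))) powi e x) (Zz + W * lz) (t (1,0))"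
    using Fder[OF Kz Klz Kdz cdz] unfolding Zz_def lz_def .
  have d1: "lbf T (Nq' - (Zq + W * lq))"
    unfolding lbf_def
  proof (intro allI impI)
    fix n assume n: "n < T"
    have "Nq' $$ n = deriv (\<lambda>s'. Phi s (N (t(q := s'))) $$ n) (t q)"
      unfolding Nq'_def by (rule fam_pdt_bnd(2)[OF s Nq])
    also have "(\<lambda>s'. Phi s (N (t(q := s'))) $$ n)
        = (\<lambda>s'. (\<Sum>x\<in>S. fls_const (c x (t(q:=s'))) * Phi s (K (t(q:=s'))) powi e x) $$ n)"
      using trq n by auto
    also have "deriv \<dots> (t q) = (Zq + W * lq) $$ n" by (rule hasd_deriv[OF Fq])
    finally show "(Nq' - (Zq + W * lq)) $$ n = 0" by simp
  qed
  have d2: "lbf T (Nz' - (Zz + W * lz))"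
    unfolding lbf_def
  proof (intro allI impI)
    fix n assume n: "n < T"
    have "Nz' $$ n = deriv (\<lambda>s'. Phi s (N (t((1,0) := s'))) $$ n) (t (1,0))"
      unfolding Nz'_def by (rule fam_pdt_bnd(2)[OF s Nz])
    also have "(\<lambda>s'. Phi s (N (t((1,0) := s'))) $$ n)
        = (\<lambda>s'. (\<Sum>x\<in>S. fls_const (c x (t((1,0):=s'))) * Phi s (K (t((1,0):=s'))) powi e x) $$ n)"
      using trz n by auto
    also have "deriv \<dots> (t (1,0)) = (Zz + W * lz) $$ n" by (rule hasd_deriv[OF Fz])
    finally show "(Nz' - (Zz + W * lz)) $$ n = 0" by simp
  qed
  define FF where "FF = (\<Sum>x\<in>S. fls_const (c x t) * l powi e x)"
  have d3: "lbf T (NN - FF)"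
    using trq[rule_format, of _ "t q"] unfolding tq NN_def FF_def l_def by (auto simp: lbf_def)
  have DFF: "Dp s FF = W * Dp s l"
    unfolding FF_def W_def Dp_sum sum_distrib_right
    by (rule sum.cong) (auto simp: Dp_mult Dp_const Dp_powi[OF lnz] mult.assoc)
  have d4: "lbf (T - 1) (Dp s NN - W * Dp s l)"
    using lbf_Dp[OF s d3] unfolding Dp_diff DFF .
  have bK: "bnd s (K t)" by (rule ubnd_bnd0[OF Kq])
  have bN: "bnd s (N t)" by (rule ubnd_bnd0[OF Nq])
  have bKz: "bnd s (fam_pdt (1,0) K t)" by (rule fam_pdt_bnd(1)[OF s Kz])
  have bNz: "bnd s (fam_pdt (1,0) N t)" by (rule fam_pdt_bnd(1)[OF s Nz])
  have bHz: "bnd s (fam_pdt (1,0) H t)" by (rule fam_pdt_bnd(1)[OF s Hb(2)])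
  have E1: "lq = hp * lz - hz * Dp s l"
    unfolding lq_def lax_fam_pdt[OF laxK] pbr_Phi(2)[OF s Hb(1) bK bHz bKz] hp_def lz_def hz_def l_def ..
  have E2: "Nq' = hp * Nz' - hz * Dp s NN"
    unfolding Nq'_def lax_fam_pdt[OF laxN] pbr_Phi(2)[OF s Hb(1) bN bHz bNz] hp_def Nz'_def hz_def NN_def ..
  have E3: "Dp s l * Nz' - lz * Dp s NN = 1"
    using pbr_Phi(2)[OF s bK bN bKz bNz] unfolding canon ser_one_Phi(2)[OF s] l_def Nz'_def lz_def NN_def
    by simp
  have llz: "lbf (-1) lz"
  proof -
    have "hasd (\<lambda>s'. Phi s (K (t((1,0):=s')))) lz (t (1,0))" unfolding lz_def by (rule line_hasd[OF s Kz Kdz])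
    moreover have "ulb (-1) (\<lambda>s'. Phi s (K (t((1,0):=s'))))" using Klz by (simp add: ulb_def)
    ultimately show ?thesis using hasd_lbf by blast
  qed
  have bh: "lbf cH hp" "lbf cH hz" "lbf cH lz" "lbf cH (Dp s l)" "cH \<le> 0"
    using Hb(3,4,5) lbf_mono[OF llz, of cH] lbf_mono[OF lbf_Dp[OF s ll], of cH]
    unfolding hp_def hz_def by auto
  have main: "(l ^ m * (Dp s l * Zq)) $$ (- s) = (l ^ m * hp) $$ (- s)"
    by (rule key_alg[OF s E1 E2 E3 d1 d2 d4 ll bh T])
  have "l ^ m * (Dp s l * Zq) = (\<Sum>x\<in>S. fls_const (pdt q (c x) t) * (l powi (int m + e x) * Dp s l))"
    unfolding Zq_def sum_distrib_left power_int_add[of l, OF disjI1[OF lnz]]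
    by (rule sum.cong) (simp_all add: algebra_simps)
  hence "(l ^ m * (Dp s l * Zq)) $$ (- s) = (\<Sum>x\<in>S. pdt q (c x) t * (if int m + e x = -1 then - of_int s else 0))"
    by (simp add: fls_sum_nth res_powi_Dp[OF s ll l_nth])
  also have "\<dots> = (\<Sum>x\<in>S. if e x = - int m - 1 then - of_int s * pdt q (c x) t else 0)"
    by (rule sum.cong) auto
  also have "\<dots> = (\<Sum>x\<in>{x\<in>S. e x = - int m - 1}. - of_int s * pdt q (c x) t)"
    by (rule sum.inter_filter[OF S, symmetric])
  also have "\<dots> = - of_int s * (\<Sum>x\<in>{x\<in>S. e x = - int m - 1}. pdt q (c x) t)"
    by (simp add: sum_distrib_left)
  finally show ?thesis using main unfolding hp_def l_def by simp
qed



lemma lbf_ex: "\<exists>a. lbf a (F :: complex fls)"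
proof -
  obtain N :: nat where N: "\<forall>n>N. F $$ (-int n) = 0" by (rule fls_nth_vanishes_below_natE)
  have "lbf (- int N) F" unfolding lbf_def
  proof (intro allI impI)
    fix j :: int assume j: "j < - int N"
    hence "nat (-j) > N" "j = - int (nat (-j))" by auto
    thus "F $$ j = 0" using N by metis
  qed
  thus ?thesis by blast
qed

lemma times_nth_zero:
  assumes "\<And>i. X $$ i * Y $$ (n - i) = 0"
  shows "((X :: complex fls) * Y) $$ n = 0"
proof -
  obtain a b where "lbf a X" "lbf b Y" using lbf_ex by blast
  then have "(X * Y) $$ n = (\<Sum>i=a..n-b. X $$ i * Y $$ (n - i))" by (rule times_nth_lb)
  also have "\<dots> = 0" by (rule sum.neutral) (use assms in blast)
  finally show ?thesis .
qed

lemma res_anti: assumes "sg s" shows "(X * Dp s Y) $$ (- s) = - ((Y * Dp s X) $$ (- s))"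
proof -
  have "Dp s (X * Y) $$ (- s) = 0" by (rule Dp_res[OF assms])
  thus ?thesis unfolding Dp_mult by (simp add: mult.commute eq_neg_iff_add_eq_0)
qed

lemma res_R2: assumes s: "sg s" shows "(trP s X * Dp s (trP s Y)) $$ (- s) = 0"
proof (rule times_nth_zero)
  fix i
  show "trP s X $$ i * Dp s (trP s Y) $$ (- s - i) = 0"
    using s by (auto simp: trP_nth Dp_nth sg_def)
qed

lemma res_R3: assumes s: "sg s" shows "((X - trP s X) * Dp s (Y - trP s Y)) $$ (- s) = 0"
proof (rule times_nth_zero)
  fix i
  show "(X - trP s X) $$ i * Dp s (Y - trP s Y) $$ (- s - i) = 0"
    using s by (auto simp: trP_nth Dp_nth sg_def)
qed

lemma res_sym_tr:
  assumes s: "sg s" and z: "(F * Dp s G) $$ (- s) = 0"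
  shows "(F * Dp s (trP s G)) $$ (- s) = (G * Dp s (trP s F)) $$ (- s)"
proof -
  define Fp Fm Gp Gm where "Fp = trP s F" "Fm = F - trP s F" "Gp = trP s G" "Gm = G - trP s G"
  have F: "F = Fp + Fm" and G: "G = Gp + Gm" by (simp_all add: Fp_Fm_Gp_Gm_def)
  have r2: "(Fp * Dp s Gp) $$ (- s) = 0" "(Gp * Dp s Fp) $$ (- s) = 0"
    unfolding Fp_Fm_Gp_Gm_def by (rule res_R2[OF s])+
  have r3: "(Fm * Dp s Gm) $$ (- s) = 0" unfolding Fp_Fm_Gp_Gm_def by (rule res_R3[OF s])
  have "0 = (F * Dp s G) $$ (- s)" using z by simp
  also have "\<dots> = (Fp * Dp s Gp) $$ (- s) + (Fp * Dp s Gm) $$ (- s) + (Fm * Dp s Gp) $$ (- s) + (Fm * Dp s Gm) $$ (- s)"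
    by (subst F, subst G) (simp add: Dp_add algebra_simps)
  finally have a: "(Fm * Dp s Gp) $$ (- s) = - (Fp * Dp s Gm) $$ (- s)" using r2 r3
    by (simp add: eq_neg_iff_add_eq_0 add.commute)
  have "(F * Dp s (trP s G)) $$ (- s) = (Fp * Dp s Gp) $$ (- s) + (Fm * Dp s Gp) $$ (- s)"
    by (subst F) (simp add: Fp_Fm_Gp_Gm_def algebra_simps)
  also have "\<dots> = (Gm * Dp s Fp) $$ (- s)" using r2 a res_anti[OF s, of Fp Gm] by simp
  also have "\<dots> = (G * Dp s (trP s F)) $$ (- s)"
    using r2 by (subst G) (simp add: Fp_Fm_Gp_Gm_def algebra_simps)
  finally show ?thesis .
qed

lemma res_sym_ntr:
  assumes s: "sg s" and z: "(F * Dp s G) $$ (- s) = 0"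
  shows "(F * Dp s (G - trP s G)) $$ (- s) = (G * Dp s (F - trP s F)) $$ (- s)"
proof -
  have z2: "(G * Dp s F) $$ (- s) = 0" using z res_anti[OF s, of G F] by simp
  have "(F * Dp s (G - trP s G)) $$ (- s) = (F * Dp s G) $$ (- s) - (F * Dp s (trP s G)) $$ (- s)"
    by (simp add: Dp_diff algebra_simps)
  also have "\<dots> = (G * Dp s F) $$ (- s) - (G * Dp s (trP s F)) $$ (- s)"
    using res_sym_tr[OF s z] z z2 by simp
  also have "\<dots> = (G * Dp s (F - trP s F)) $$ (- s)"
    by (simp add: Dp_diff algebra_simps)
  finally show ?thesis .
qed

definition res2 :: "ser \<Rightarrow> ser \<Rightarrow> complex" where
  "res2 A B = ser_mult A (ser_dp B) (-1)"

lemma res2_Phi: assumes "sg s" "bnd s A" "bnd s B"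
  shows "res2 A B = (Phi s A * Dp s (Phi s B)) $$ (- s)"
proof -
  have "res2 A B = ser_mult A (ser_dp B) (s * (- s))"
    using assms(1) by (auto simp: res2_def sg_def)
  also have "\<dots> = (Phi s A * Phi s (ser_dp B)) $$ (- s)"
    by (rule ser_mult_Phi_nth[OF assms(1,2) ser_dp_Phi(1)[OF assms(1,3)]])
  finally show ?thesis using ser_dp_Phi(2)[OF assms(1,3)] by simp
qed



definition Pset :: "(nat \<times> nat) set" where "Pset = {(m,n). m + n \<ge> 2}"

definition Mgen :: "(nat \<times> nat \<Rightarrow> nat) \<Rightarrow> nat \<times> nat \<Rightarrow> int \<Rightarrow> fam \<Rightarrow> (nat \<Rightarrow> times \<Rightarrow> complex) \<Rightarrow> fam" where
  "Mgen sel b0 s K w t = ser_add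
     (ser_add (ser_sum Pset (\<lambda>x. ser_smul (of_nat (sel x) * t x) (ser_pow (K t) (sel x - 1))))
              (ser_const (t b0)))
     (ser_sum {i. i \<ge> 1} (\<lambda>i. ser_smul (w (i + 1) t) (ser_pow (ser_inv s (K t)) (i + 1))))"

lemma Mser_gen: "Mser K v = Mgen fst (1,0) (-1) K v"
  unfolding Mser_def Mgen_def Pset_def inv_up_eq by (intro ext) (simp add: case_prod_unfold)

lemma Mhser_gen: "Mhser K v = Mgen snd (0,1) 1 K v"
  unfolding Mhser_def Mgen_def Pset_def inv_down_eq by (intro ext) (simp add: case_prod_unfold)

lemma ser_sum_fin:
  assumes "finite A" "\<And>x. x \<in> I \<Longrightarrow> x \<notin> A \<Longrightarrow> G x j = 0"
  shows "ser_sum I G j = (\<Sum>x\<in>I \<inter> A. G x j)"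
proof -
  have sub: "{x. x \<in> I \<and> G x j \<noteq> 0} \<subseteq> I \<inter> A" using assms(2) by blast
  have "ser_sum I G j = (\<Sum>x | x \<in> I \<and> G x j \<noteq> 0. G x j)" by (simp add: ser_sum_def)
  also have "\<dots> = (\<Sum>x\<in>I \<inter> A. G x j)"
    by (rule sum.mono_neutral_left) (use assms(1) sub in auto)
  finally show ?thesis .
qed

lemma ser_sum_zero: "(\<And>x. x \<in> I \<Longrightarrow> G x j = 0) \<Longrightarrow> ser_sum I G j = 0"
  by (simp add: ser_sum_def)

lemma fin_upd: "fin_times t \<Longrightarrow> q \<noteq> (0,0) \<Longrightarrow> fin_times (t(q := s))"
proof -
  assume a: "fin_times t" "q \<noteq> (0,0)"
  have "{x. (t(q := s)) x \<noteq> 0} \<subseteq> insert q {x. t x \<noteq> 0}" by auto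
  moreover have "finite {x. t x \<noteq> 0}" "t (0,0) = 0" using a(1) by (auto simp: fin_times_def)
  ultimately have "finite {x. (t(q := s)) x \<noteq> 0}" by (meson finite_insert finite_subset)
  thus ?thesis using a \<open>t (0,0) = 0\<close> by (simp add: fin_times_def)
qed

definition kworld :: "int \<Rightarrow> fam \<Rightarrow> bool" where
  "kworld s K \<longleftrightarrow> (\<forall>t' j. s * j < -1 \<longrightarrow> K t' j = 0) \<and> (\<forall>t'. fin_times t' \<longrightarrow> K t' (- s) \<noteq> 0)
      \<and> (\<forall>j. regular (\<lambda>t'. K t' j))"

lemma kw_bnd: "kworld s K \<Longrightarrow> bnd s (K t')"
  unfolding kworld_def bnd_def by blast

lemma kw_ubnd: "kworld s K \<Longrightarrow> ubnd s p t K"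
  unfolding kworld_def ubnd_def by blast

lemma kw_lbf: assumes "sg s" "kworld s K" shows "lbf (-1) (Phi s (K t'))"
  unfolding lbf_def
proof (intro allI impI)
  fix j :: int assume "j < -1"
  hence "s * (s * j) < -1" by (simp only: sg_sq[OF assms(1)])
  thus "Phi s (K t') $$ j = 0" using assms(2) Phi_nth[OF assms(1) kw_bnd[OF assms(2)]]
    unfolding kworld_def by simp
qed

lemma kw_lead: assumes "sg s" "kworld s K" "fin_times t'" shows "Phi s (K t') $$ (-1) \<noteq> 0"
  using Phi_nth[OF assms(1) kw_bnd[OF assms(2)], of t' "-1"] assms(2,3) unfolding kworld_def by simp

lemma kw_Phi_nz: assumes "sg s" "kworld s K" "fin_times t'" shows "Phi s (K t') \<noteq> 0"
  using kw_lead[OF assms] by (metis fls_zero_nth)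

lemma kw_pow: assumes "sg s" "kworld s K"
  shows "bnd s (ser_pow (K t') k)" "Phi s (ser_pow (K t') k) = Phi s (K t') ^ k"
    "s * j < - int k \<Longrightarrow> ser_pow (K t') k j = 0"
proof -
  note P = ser_pow_Phi[OF assms(1) kw_bnd[OF assms(2)], of t' k]
  show b: "bnd s (ser_pow (K t') k)" "Phi s (ser_pow (K t') k) = Phi s (K t') ^ k" using P by auto
  assume j: "s * j < - int k"
  have "lbf (int k * (-1)) (Phi s (K t') ^ k)" by (rule lbf_pow_const[OF kw_lbf[OF assms]])
  thus "ser_pow (K t') k j = 0" using Phi_nth'[OF assms(1) b(1), of j] b(2) j by (simp add: lbf_def)
qed

lemma kw_inv: assumes "sg s" "kworld s K" "fin_times t'"
  shows "bnd s (ser_pow (ser_inv s (K t')) k)" "Phi s (ser_pow (ser_inv s (K t')) k) = inverse (Phi s (K t')) ^ k"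
    "s * j < int k \<Longrightarrow> ser_pow (ser_inv s (K t')) k j = 0"
proof -
  note I = ser_inv_Phi[OF assms(1) kw_bnd[OF assms(2)] kw_Phi_nz[OF assms]]
  note P = ser_pow_Phi[OF assms(1) I(1), of k]
  show b: "bnd s (ser_pow (ser_inv s (K t')) k)" "Phi s (ser_pow (ser_inv s (K t')) k) = inverse (Phi s (K t')) ^ k"
    using P I by auto
  assume j: "s * j < int k"
  have "lbf (- (-1)) (inverse (Phi s (K t')))" by (rule lbf_inverse[OF kw_lbf[OF assms(1,2)] kw_lead[OF assms]])
  hence "lbf (int k * 1) (inverse (Phi s (K t')) ^ k)" using lbf_pow_const by fastforce
  thus "ser_pow (ser_inv s (K t')) k j = 0" using Phi_nth'[OF assms(1) b(1), of j] b(2) j by (simp add: lbf_def)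
qed

lemma N_zero:
  assumes s: "sg s" and K: "kworld s K" and t: "fin_times t'" and A: "{x. t' x \<noteq> 0} \<subseteq> A"
    and Mx: "\<forall>x\<in>A. sel x \<le> Mx" and j: "s * j < - int Mx - 2"
  shows "Mgen sel b0 s K w t' j = 0"
proof -
  have T1: "ser_sum Pset (\<lambda>x. ser_smul (of_nat (sel x) * t' x) (ser_pow (K t') (sel x - 1))) j = 0"
  proof (rule ser_sum_zero)
    fix x assume "x \<in> Pset"
    show "ser_smul (of_nat (sel x) * t' x) (ser_pow (K t') (sel x - 1)) j = 0"
    proof (cases "t' x = 0")
      case True then show ?thesis by (simp add: ser_smul_def)
    next
      case False
      hence "x \<in> A" using A by auto
      hence "s * j < - int (sel x - 1)" using Mx j by force
      then show ?thesis using kw_pow(3)[OF s K] by (simp add: ser_smul_def)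
    qed
  qed
  have T2: "ser_sum {i. i \<ge> 1} (\<lambda>i. ser_smul (w (i + 1) t') (ser_pow (ser_inv s (K t')) (i + 1))) j = 0"
  proof (rule ser_sum_zero)
    fix i :: nat
    have "s * j < int (i + 1)" using j by simp
    have z: "ser_pow (ser_inv s (K t')) (i + 1) j = 0" by (rule kw_inv(3)[OF s K t]) fact
    show "ser_smul (w (i + 1) t') (ser_pow (ser_inv s (K t')) (i + 1)) j = 0"
      unfolding ser_smul_def z by simp
  qed
  have "j \<noteq> 0" using j by auto
  thus ?thesis unfolding Mgen_def ser_add_def using T1 T2 by (simp add: ser_const_def)
qed

lemma N_ubnd: assumes s: "sg s" and K: "kworld s K" and t: "fin_times t" and p: "p \<noteq> (0,0)"
  shows "ubnd s p t (Mgen sel b0 s K w)"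
proof -
  define A where "A = insert p {x. t x \<noteq> 0}"
  have fA: "finite A" using t by (simp add: A_def fin_times_def)
  define Mx where "Mx = Max (sel ` A)"
  have Mx: "\<forall>x\<in>A. sel x \<le> Mx" using fA by (simp add: Mx_def)
  have "\<forall>s' j. s * j < - int Mx - 2 \<longrightarrow> Mgen sel b0 s K w (t(p := s')) j = 0"
  proof (intro allI impI)
    fix s' j assume j: "s * j < - int Mx - 2"
    show "Mgen sel b0 s K w (t(p := s')) j = 0"
      by (rule N_zero[OF s K fin_upd[OF t p] _ Mx j]) (auto simp: A_def)
  qed
  thus ?thesis unfolding ubnd_def by blast
qed

definition cc :: "(nat \<times> nat \<Rightarrow> nat) \<Rightarrow> (nat \<Rightarrow> times \<Rightarrow> complex) \<Rightarrow> (nat \<times> nat) + nat \<Rightarrow> times \<Rightarrow> complex" where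
  "cc sel w x t' = (case x of Inl y \<Rightarrow> of_nat (sel y) * t' y | Inr i \<Rightarrow> w (i + 1) t')"

definition ee :: "(nat \<times> nat \<Rightarrow> nat) \<Rightarrow> (nat \<times> nat) + nat \<Rightarrow> int" where
  "ee sel x = (case x of Inl y \<Rightarrow> int (sel y - 1) | Inr i \<Rightarrow> - (int i + 1))"

definition SS :: "nat \<times> nat \<Rightarrow> (nat \<times> nat) set \<Rightarrow> int \<Rightarrow> ((nat \<times> nat) + nat) set" where
  "SS b0 A T = Inl ` (insert b0 (Pset \<inter> A)) \<union> Inr ` {1..nat T}"

lemma SS_finite: "finite A \<Longrightarrow> finite (SS b0 A T)"
  by (simp add: SS_def)

lemma sum_SS: assumes "finite A"
  shows "(\<Sum>x\<in>SS b0 A T. F x) = (\<Sum>y\<in>insert b0 (Pset \<inter> A). F (Inl y)) + (\<Sum>i\<in>{1..nat T}. F (Inr i))"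
proof -
  have "(\<Sum>x\<in>SS b0 A T. F x) = (\<Sum>x\<in>Inl ` (insert b0 (Pset \<inter> A)). F x) + (\<Sum>x\<in>Inr ` {1..nat T}. F x)"
    unfolding SS_def by (rule sum.union_disjoint) (use assms in auto)
  also have "(\<Sum>x\<in>Inl ` (insert b0 (Pset \<inter> A)). F x) = (\<Sum>y\<in>insert b0 (Pset \<inter> A). F (Inl y))"
    by (subst sum.reindex) (auto simp: comp_def)
  also have "(\<Sum>x\<in>Inr ` {1..nat T}. F x) = (\<Sum>i\<in>{1..nat T}. F (Inr i))"
    by (subst sum.reindex) (auto simp: comp_def)
  finally show ?thesis .
qed

lemma N_trunc:
  assumes s: "sg s" and K: "kworld s K" and t: "fin_times t'" and A: "{x. t' x \<noteq> 0} \<subseteq> A" "finite A"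
    and b0: "b0 \<notin> Pset" "sel b0 = 1" and n: "n < T"
  shows "Phi s (Mgen sel b0 s K w t') $$ n
       = (\<Sum>x\<in>SS b0 A T. fls_const (cc sel w x t') * Phi s (K t') powi ee sel x) $$ n"
proof -
  define l where "l = Phi s (K t')"
  define j where "j = s * n"
  have bN: "bnd s (Mgen sel b0 s K w t')"
  proof -
    define Mx where "Mx = Max (sel ` A)"
    have Mx: "\<forall>x\<in>A. sel x \<le> Mx" using A(2) by (simp add: Mx_def)
    show ?thesis unfolding bnd_def using N_zero[OF s K t A(1) Mx] by blast
  qed
  have lhs: "Phi s (Mgen sel b0 s K w t') $$ n = Mgen sel b0 s K w t' j"
    unfolding j_def by (rule Phi_nth[OF s bN])
  have TT: "ser_sum Pset (\<lambda>x. ser_smul (of_nat (sel x) * t' x) (ser_pow (K t') (sel x - 1))) j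
      = (\<Sum>y\<in>Pset \<inter> A. of_nat (sel y) * t' y * (l powi int (sel y - 1)) $$ n)"
  proof -
    have "ser_sum Pset (\<lambda>x. ser_smul (of_nat (sel x) * t' x) (ser_pow (K t') (sel x - 1))) j
        = (\<Sum>y\<in>Pset \<inter> A. ser_smul (of_nat (sel y) * t' y) (ser_pow (K t') (sel y - 1)) j)"
      by (rule ser_sum_fin[OF A(2)]) (use A(1) in \<open>auto simp: ser_smul_def\<close>)
    also have "\<dots> = (\<Sum>y\<in>Pset \<inter> A. of_nat (sel y) * t' y * (l powi int (sel y - 1)) $$ n)"
    proof (rule sum.cong)
      fix y
      have "ser_pow (K t') (sel y - 1) j = Phi s (ser_pow (K t') (sel y - 1)) $$ n"
        unfolding j_def by (rule Phi_nth[OF s kw_pow(1)[OF s K], symmetric])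
      thus "ser_smul (of_nat (sel y) * t' y) (ser_pow (K t') (sel y - 1)) j
          = of_nat (sel y) * t' y * (l powi int (sel y - 1)) $$ n"
        using kw_pow(2)[OF s K] by (simp add: ser_smul_def l_def)
    qed simp
    finally show ?thesis .
  qed
  have CC: "ser_const (t' b0) j = t' b0 * (l powi 0) $$ n"
    using s by (auto simp: ser_const_def j_def sg_def)
  have VV: "ser_sum {i. i \<ge> 1} (\<lambda>i. ser_smul (w (i + 1) t') (ser_pow (ser_inv s (K t')) (i + 1))) j
      = (\<Sum>i\<in>{1..nat T}. w (i + 1) t' * (l powi (- (int i + 1))) $$ n)"
  proof -
    have "ser_sum {i. i \<ge> 1} (\<lambda>i. ser_smul (w (i + 1) t') (ser_pow (ser_inv s (K t')) (i + 1))) j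
        = (\<Sum>i\<in>{i. i \<ge> 1} \<inter> {1..nat T}. ser_smul (w (i + 1) t') (ser_pow (ser_inv s (K t')) (i + 1)) j)"
    proof (rule ser_sum_fin)
      fix i :: nat assume "i \<in> {i. i \<ge> 1}" "i \<notin> {1..nat T}"
      hence "int i > T - 1" using n by auto
      hence "s * j < int (i + 1)" using n s by (auto simp: j_def sg_def)
      have z: "ser_pow (ser_inv s (K t')) (i + 1) j = 0" by (rule kw_inv(3)[OF s K t]) fact
      show "ser_smul (w (i + 1) t') (ser_pow (ser_inv s (K t')) (i + 1)) j = 0"
        unfolding ser_smul_def z by simp
    qed simp
    also have "{i. i \<ge> 1} \<inter> {1..nat T} = {1..nat T}" by auto
    also have "(\<Sum>i\<in>{1..nat T}. ser_smul (w (i + 1) t') (ser_pow (ser_inv s (K t')) (i + 1)) j)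
        = (\<Sum>i\<in>{1..nat T}. w (i + 1) t' * (l powi (- (int i + 1))) $$ n)"
    proof (rule sum.cong)
      fix i :: nat
      have "ser_pow (ser_inv s (K t')) (i + 1) j = Phi s (ser_pow (ser_inv s (K t')) (i + 1)) $$ n"
        unfolding j_def by (rule Phi_nth[OF s kw_inv(1)[OF s K t], symmetric])
      also have "\<dots> = (inverse l ^ (i + 1)) $$ n" unfolding kw_inv(2)[OF s K t] l_def ..
      also have "\<dots> = (l powi (- (int i + 1))) $$ n"
        by (simp add: power_int_def nat_add_distrib del: power_Suc)
      finally show "ser_smul (w (i + 1) t') (ser_pow (ser_inv s (K t')) (i + 1)) j
          = w (i + 1) t' * (l powi (- (int i + 1))) $$ n" by (simp add: ser_smul_def)
    qed simp
    finally show ?thesis .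
  qed
  have rhs: "(\<Sum>x\<in>SS b0 A T. fls_const (cc sel w x t') * l powi ee sel x) $$ n
      = (\<Sum>y\<in>insert b0 (Pset \<inter> A). of_nat (sel y) * t' y * (l powi int (sel y - 1)) $$ n)
        + (\<Sum>i\<in>{1..nat T}. w (i + 1) t' * (l powi (- (int i + 1))) $$ n)"
    unfolding fls_sum_nth sum_SS[OF A(2)] by (simp add: cc_def ee_def fls_sum_nth)
  also have "(\<Sum>y\<in>insert b0 (Pset \<inter> A). of_nat (sel y) * t' y * (l powi int (sel y - 1)) $$ n)
      = t' b0 * (l powi 0) $$ n + (\<Sum>y\<in>Pset \<inter> A. of_nat (sel y) * t' y * (l powi int (sel y - 1)) $$ n)"
    using b0 A(2) by (subst sum.insert) auto
  finally have R: "(\<Sum>x\<in>SS b0 A T. fls_const (cc sel w x t') * l powi ee sel x) $$ n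
      = t' b0 * (l powi 0) $$ n + (\<Sum>y\<in>Pset \<inter> A. of_nat (sel y) * t' y * (l powi int (sel y - 1)) $$ n)
        + (\<Sum>i\<in>{1..nat T}. w (i + 1) t' * (l powi (- (int i + 1))) $$ n)" .
  have "Mgen sel b0 s K w t' j = ser_sum Pset (\<lambda>x. ser_smul (of_nat (sel x) * t' x) (ser_pow (K t') (sel x - 1))) j
      + ser_const (t' b0) j + ser_sum {i. i \<ge> 1} (\<lambda>i. ser_smul (w (i + 1) t') (ser_pow (ser_inv s (K t')) (i + 1))) j"
    unfolding Mgen_def ser_add_def ..
  also have "\<dots> = (\<Sum>x\<in>SS b0 A T. fls_const (cc sel w x t') * l powi ee sel x) $$ n"
    unfolding TT CC VV R by (simp add: algebra_simps)
  finally show ?thesis unfolding lhs l_def .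
qed

lemma H_world:
  assumes s: "sg s" and H: "\<forall>t' j. int B < \<bar>j\<bar> \<longrightarrow> H t' j = 0"
  shows "bnd s (H t)" "ubnd s p t H" "lbf (- int B - 2) (Dp s (Phi s (H t)))"
    "lbf (- int B - 2) (Phi s (fam_pdt p H t))"
proof -
  have u: "ubnd s p t H" unfolding ubnd_def
  proof (intro exI allI impI)
    fix s' j assume "s * j < - int B"
    hence "int B < \<bar>j\<bar>" using s by (auto simp: sg_def)
    thus "H (t(p := s')) j = 0" using H by blast
  qed
  show "ubnd s p t H" by (rule u)
  show b: "bnd s (H t)" by (rule ubnd_bnd0[OF u])
  have l0: "lbf (- int B) (Phi s (H t))" unfolding lbf_def
  proof (intro allI impI)
    fix n :: int assume "n < - int B"
    hence "int B < \<bar>s * n\<bar>" using s by (auto simp: sg_def)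
    thus "Phi s (H t) $$ n = 0" using H Phi_nth[OF s b] by simp
  qed
  show "lbf (- int B - 2) (Dp s (Phi s (H t)))" using lbf_Dp[OF s l0] by (rule lbf_mono) simp
  have "lbf (- int B) (Phi s (fam_pdt p H t))" unfolding lbf_def
  proof (intro allI impI)
    fix n :: int assume "n < - int B"
    hence "int B < \<bar>s * n\<bar>" using s by (auto simp: sg_def)
    hence "(\<lambda>s'. Phi s (H (t(p := s'))) $$ n) = (\<lambda>_. 0)"
      using H Phi_nth[OF s ubnd_bnd[OF u]] by simp
    thus "Phi s (fam_pdt p H t) $$ n = 0" unfolding fam_pdt_bnd(2)[OF s u] by simp
  qed
  thus "lbf (- int B - 2) (Phi s (fam_pdt p H t))" by (rule lbf_mono) simp
qed

lemma world:
  assumes s: "sg s" and K: "kworld s K" and t: "fin_times t" and ab: "a + b \<ge> 1"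
    and H: "\<forall>t' j. int B < \<bar>j\<bar> \<longrightarrow> H t' j = 0"
    and b0: "b0 \<in> {(1,0),(0,1)}" "sel b0 = 1"
    and w: "\<forall>i. regular (w i)"
    and laxK: "lax_eq H K a b" and laxN: "lax_eq H (Mgen sel b0 s K w) a b"
    and canon: "\<forall>t. fin_times t \<longrightarrow> pbr K (Mgen sel b0 s K w) t = ser_one"
    and m: "m \<ge> 1"
  shows "pdt (a,b) (w (m+1)) t = - of_int s * res2 (ser_pow (K t) m) (H t)"
proof -
  define q where "q = (a,b)"
  define N where "N = Mgen sel b0 s K w"
  define A where "A = insert q (insert (1,0) {x. t x \<noteq> 0})"
  define cH :: int where "cH = - int B - 2"
  define T :: int where "T = int m + 3 - 2 * cH"
  have q0: "q \<noteq> (0,0)" using ab by (auto simp: q_def)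
  have fA: "finite A" using t by (simp add: A_def fin_times_def)
  have b0P: "b0 \<notin> Pset" using b0 by (auto simp: Pset_def)
  have Kl: "\<forall>s'. lbf (-1) (Phi s (K (t(p:=s')))) \<and> Phi s (K (t(p:=s'))) $$ (-1) \<noteq> 0"
    if "p \<noteq> (0,0)" for p
    using kw_lbf[OF s K] kw_lead[OF s K fin_upd[OF t that]] by blast
  have Kd: "\<forall>j. (\<lambda>s'. K (t(p:=s')) j) field_differentiable at (t p)" if "fst p + snd p \<ge> 1" for p
    using K t that unfolding kworld_def regular_def by blast
  have cd: "\<forall>x\<in>SS b0 A T. (\<lambda>s'. cc sel w x (t(p:=s'))) field_differentiable at (t p)"
    if "fst p + snd p \<ge> 1" for p
  proof
    fix x assume "x \<in> SS b0 A T"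
    show "(\<lambda>s'. cc sel w x (t(p:=s'))) field_differentiable at (t p)"
    proof (cases x)
      case (Inl y)
      have "(\<lambda>s'. cc sel w x (t(p:=s'))) = (\<lambda>s'. of_nat (sel y) * (if y = p then s' else t y))"
        by (auto simp: cc_def Inl)
      then show ?thesis by (cases "y = p") (auto intro!: derivative_intros)
    next
      case (Inr i)
      have "(\<lambda>s'. cc sel w x (t(p:=s'))) = (\<lambda>s'. w (i + 1) (t(p:=s')))" by (auto simp: cc_def Inr)
      then show ?thesis using w t that unfolding regular_def by (metis prod.collapse)
    qed
  qed
  have tr: "\<forall>s' n. n < T \<longrightarrow> Phi s (N (t(p:=s'))) $$ n
      = (\<Sum>x\<in>SS b0 A T. fls_const (cc sel w x (t(p:=s'))) * Phi s (K (t(p:=s'))) powi ee sel x) $$ n"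
    if "p \<in> A" "p \<noteq> (0,0)" for p
  proof (intro allI impI)
    fix s' n assume n: "n < T"
    have sub: "{x. (t(p := s')) x \<noteq> 0} \<subseteq> A" using that by (auto simp: A_def)
    show "Phi s (N (t(p:=s'))) $$ n
      = (\<Sum>x\<in>SS b0 A T. fls_const (cc sel w x (t(p:=s'))) * Phi s (K (t(p:=s'))) powi ee sel x) $$ n"
      unfolding N_def by (rule N_trunc[where sel=sel and ?b0.0=b0 and w=w, OF s K fin_upd[OF t that(2), where s=s'] sub fA b0P b0(2) n])
  qed
  have lax1: "\<forall>j. ((\<lambda>s'. K (t(q:=s')) j) has_field_derivative pbr H K t j) (at (t q))"
    using laxK t unfolding lax_eq_def q_def by blast
  have lax2: "\<forall>j. ((\<lambda>s'. N (t(q:=s')) j) has_field_derivative pbr H N t j) (at (t q))"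
    using laxN t unfolding lax_eq_def q_def N_def by blast
  have qA: "q \<in> A" "(1,0) \<in> A" by (auto simp: A_def)
  have fq: "fst q + snd q \<ge> 1" using ab by (simp add: q_def)
  note HW = H_world[OF s H]
  have Klq: "\<forall>s'. lbf (-1) (Phi s (K (t(q:=s')))) \<and> Phi s (K (t(q:=s'))) $$ (-1) \<noteq> 0"
    by (rule Kl[OF q0])
  have Klz: "\<forall>s'. lbf (-1) (Phi s (K (t((1,0):=s')))) \<and> Phi s (K (t((1,0):=s'))) $$ (-1) \<noteq> 0"
    by (rule Kl) simp
  have Kdq: "\<forall>j. (\<lambda>s'. K (t(q:=s')) j) field_differentiable at (t q)" by (rule Kd[OF fq])
  have Kdz: "\<forall>j. (\<lambda>s'. K (t((1,0):=s')) j) field_differentiable at (t (1,0))" by (rule Kd) simp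
  have Hb: "bnd s (H t)" "ubnd s (1,0) t H" "lbf cH (Dp s (Phi s (H t)))"
           "lbf cH (Phi s (fam_pdt (1,0) H t))" "cH \<le> -2"
    using HW(1)[where t=t] HW(2)[where t=t and p="(1,0)"] HW(3)[where t=t] HW(4)[where t=t and p="(1,0)"] by (auto simp: cH_def)
  have Nq: "ubnd s q t N" unfolding N_def by (rule N_ubnd[OF s K t q0])
  have Nz: "ubnd s (1,0) t N" unfolding N_def by (rule N_ubnd[OF s K t]) simp
  have can: "pbr K N t = ser_one" using canon t by (simp add: N_def)
  have cdq: "\<forall>x\<in>SS b0 A T. (\<lambda>s'. cc sel w x (t(q:=s'))) field_differentiable at (t q)" by (rule cd[OF fq])
  have cdz: "\<forall>x\<in>SS b0 A T. (\<lambda>s'. cc sel w x (t((1,0):=s'))) field_differentiable at (t (1,0))"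
    by (rule cd) simp
  have trq: "\<forall>s' n. n < T \<longrightarrow> Phi s (N (t(q:=s'))) $$ n
      = (\<Sum>x\<in>SS b0 A T. fls_const (cc sel w x (t(q:=s'))) * Phi s (K (t(q:=s'))) powi ee sel x) $$ n"
    by (rule tr[OF qA(1) q0])
  have trz: "\<forall>s' n. n < T \<longrightarrow> Phi s (N (t((1,0):=s'))) $$ n
      = (\<Sum>x\<in>SS b0 A T. fls_const (cc sel w x (t((1,0):=s'))) * Phi s (K (t((1,0):=s'))) powi ee sel x) $$ n"
    by (rule tr[OF qA(2)]) simp
  have TT: "T > int m + 2 - 2 * cH" by (simp add: T_def)
  have key: "- of_int s * (\<Sum>x\<in>{x\<in>SS b0 A T. ee sel x = - int m - 1}. pdt q (cc sel w x) t)
         = (Phi s (K t) ^ m * Dp s (Phi s (H t))) $$ (- s)"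
    by (rule key_ser[OF s kw_ubnd[OF K] kw_ubnd[OF K] Klq Klz Kdq Kdz Hb Nq Nz lax1 lax2 can
          SS_finite[OF fA] cdq cdz trq trz TT])
  have mS: "Inr m \<in> SS b0 A T" using m by (auto simp: SS_def T_def cH_def)
  have "{x\<in>SS b0 A T. ee sel x = - int m - 1} = {Inr m}"
    by (rule set_eqI, case_tac x) (use mS in \<open>auto simp: ee_def\<close>)
  moreover have "cc sel w (Inr m) = w (m + 1)" by (rule ext) (simp add: cc_def)
  ultimately have "(\<Sum>x\<in>{x\<in>SS b0 A T. ee sel x = - int m - 1}. pdt q (cc sel w x) t) = pdt q (w (m + 1)) t"
    by simp
  moreover have "(Phi s (K t) ^ m * Dp s (Phi s (H t))) $$ (- s) = res2 (ser_pow (K t) m) (H t)"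
    using res2_Phi[OF s kw_pow(1)[OF s K] HW(1)] kw_pow(2)[OF s K] by simp
  ultimately have "- of_int s * pdt q (w (m + 1)) t = res2 (ser_pow (K t) m) (H t)" using key by simp
  hence "(- of_int s) * (- of_int s * pdt q (w (m + 1)) t) = - of_int s * res2 (ser_pow (K t) m) (H t)" by simp
  moreover have "(- of_int s) * (- of_int s) = (1 :: complex)" using s by (auto simp: sg_def)
  ultimately show ?thesis unfolding q_def by (simp add: mult.assoc[symmetric])
qed



lemma finsupp_bnd: assumes "sg s" "\<forall>j. int B < \<bar>j\<bar> \<longrightarrow> A j = 0" shows "bnd s A"
  unfolding bnd_def
proof (intro exI allI impI)
  fix j assume "s * j < - int B"
  hence "int B < \<bar>j\<bar>" using assms(1) by (auto simp: sg_def)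
  thus "A j = 0" using assms(2) by blast
qed

lemma res2_add: assumes "sg s" "bnd s A" "bnd s P" "bnd s Q"
  shows "res2 A (ser_add P Q) = res2 A P + res2 A Q"
  using res2_Phi[OF assms(1,2) ser_add_Phi(1)[OF assms(1,3,4)]] res2_Phi[OF assms(1,2,3)] res2_Phi[OF assms(1,2,4)]
    ser_add_Phi(2)[OF assms(1,3,4)] by (simp add: Dp_add distrib_left)

lemma res0: assumes s: "sg s" and K: "kworld s K" and t: "fin_times t'" and mk: "m + k > 0"
  shows "(Phi s (K t') ^ m * Dp s (Phi s (K t') ^ k)) $$ (- s) = 0"
proof -
  define l where "l = Phi s (K t')"
  have ll: "lbf (-1) l" unfolding l_def by (rule kw_lbf[OF s K])
  have ln: "l $$ (-1) \<noteq> 0" unfolding l_def by (rule kw_lead[OF s K t])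
  show ?thesis
  proof (cases "k = 0")
    case True then show ?thesis using Dp_const[of s 1] by (simp add: fls_const_1)
  next
    case False
    have "l ^ m * Dp s (l ^ k) = fls_const (of_nat k) * (l ^ (m + k - 1) * Dp s l)"
      using False by (simp add: Dp_pow fls_of_nat power_add[symmetric] algebra_simps)
    moreover
    have r: "(l powi int (m + k - 1) * Dp s l) $$ (- s) = (if int (m + k - 1) = -1 then - of_int s else 0)"
      by (rule res_powi_Dp[OF s ll ln])
    hence "(l ^ (m + k - 1) * Dp s l) $$ (- s) = 0" unfolding power_int_of_nat by simp
    ultimately show ?thesis unfolding l_def[symmetric] by simp
  qed
qed

lemma pos_pow_supp: assumes "kworld (-1) K"
  shows "\<forall>j. int k < \<bar>j\<bar> \<longrightarrow> pos_part (ser_pow (K t') k) j = 0"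
proof (intro allI impI)
  fix j :: int assume j: "int k < \<bar>j\<bar>"
  show "pos_part (ser_pow (K t') k) j = 0"
  proof (cases "j > 0")
    case True
    hence "(-1) * j < - int k" using j by simp
    then show ?thesis using kw_pow(3)[OF _ assms] by (simp add: pos_part_def sg_def)
  qed (simp add: pos_part_def)
qed

lemma nonpos_pow_supp: assumes "kworld 1 K"
  shows "\<forall>j. int k < \<bar>j\<bar> \<longrightarrow> nonpos_part (ser_pow (K t') k) j = 0"
proof (intro allI impI)
  fix j :: int assume j: "int k < \<bar>j\<bar>"
  show "nonpos_part (ser_pow (K t') k) j = 0"
  proof (cases "j \<le> 0")
    case True
    hence "1 * j < - int k" using j by simp
    then show ?thesis using kw_pow(3)[OF _ assms] by (simp add: nonpos_part_def sg_def)
  qed (simp add: nonpos_part_def)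
qed

lemma X1_sym: assumes s: "sg s" and K: "kworld s K" and t: "fin_times t" and mk: "m > 0" "k > 0"
  shows "res2 (ser_pow (K t) m) (pos_part (ser_pow (K t) k)) = res2 (ser_pow (K t) k) (pos_part (ser_pow (K t) m))"
proof -
  note pm = kw_pow[OF s K, where t'=t and k=m] and pk = kw_pow[OF s K, where t'=t and k=k]
  have "res2 (ser_pow (K t) m) (pos_part (ser_pow (K t) k))
      = (Phi s (K t) ^ m * Dp s (trP s (Phi s (K t) ^ k))) $$ (- s)"
    using res2_Phi[OF s pm(1) pos_part_Phi(1)[OF s pk(1)]] pos_part_Phi(2)[OF s pk(1)] pm(2) pk(2) by simp
  also have "\<dots> = (Phi s (K t) ^ k * Dp s (trP s (Phi s (K t) ^ m))) $$ (- s)"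
    by (rule res_sym_tr[OF s res0[OF s K t]]) (use mk in simp)
  also have "\<dots> = res2 (ser_pow (K t) k) (pos_part (ser_pow (K t) m))"
    using res2_Phi[OF s pk(1) pos_part_Phi(1)[OF s pm(1)]] pos_part_Phi(2)[OF s pm(1)] pm(2) pk(2) by simp
  finally show ?thesis .
qed

lemma X4_sym: assumes s: "sg s" and K: "kworld s K" and t: "fin_times t" and mk: "m > 0" "k > 0"
  shows "res2 (ser_pow (K t) m) (nonpos_part (ser_pow (K t) k)) = res2 (ser_pow (K t) k) (nonpos_part (ser_pow (K t) m))"
proof -
  note pm = kw_pow[OF s K, where t'=t and k=m] and pk = kw_pow[OF s K, where t'=t and k=k]
  have "res2 (ser_pow (K t) m) (nonpos_part (ser_pow (K t) k))
      = (Phi s (K t) ^ m * Dp s (Phi s (K t) ^ k - trP s (Phi s (K t) ^ k))) $$ (- s)"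
    using res2_Phi[OF s pm(1) nonpos_part_Phi(1)[OF s pk(1)]] nonpos_part_Phi(2)[OF s pk(1)] pm(2) pk(2) by simp
  also have "\<dots> = (Phi s (K t) ^ k * Dp s (Phi s (K t) ^ m - trP s (Phi s (K t) ^ m))) $$ (- s)"
    by (rule res_sym_ntr[OF s res0[OF s K t]]) (use mk in simp)
  also have "\<dots> = res2 (ser_pow (K t) k) (nonpos_part (ser_pow (K t) m))"
    using res2_Phi[OF s pk(1) nonpos_part_Phi(1)[OF s pm(1)]] nonpos_part_Phi(2)[OF s pm(1)] pm(2) pk(2) by simp
  finally show ?thesis .
qed

lemma X23: assumes L: "kworld (-1) L" and Lh: "kworld 1 Lh"
  shows "res2 (ser_pow (L t) m) (nonpos_part (ser_pow (Lh t) l)) = - res2 (ser_pow (Lh t) l) (pos_part (ser_pow (L t) m))"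
proof -
  have sm: "sg (-1)" "sg 1" by (auto simp: sg_def)
  define P where "P = pos_part (ser_pow (L t) m)"
  define Q where "Q = nonpos_part (ser_pow (Lh t) l)"
  have Ps: "\<forall>j. int m < \<bar>j\<bar> \<longrightarrow> P j = 0" unfolding P_def by (rule pos_pow_supp[OF L])
  have Qs: "\<forall>j. int l < \<bar>j\<bar> \<longrightarrow> Q j = 0" unfolding Q_def by (rule nonpos_pow_supp[OF Lh])
  have bP: "bnd s P" "bnd s Q" if "sg s" for s using finsupp_bnd[OF that Ps] finsupp_bnd[OF that Qs] by auto
  note pm = kw_pow[OF sm(1) L, where t'=t and k=m] and pl = kw_pow[OF sm(2) Lh, where t'=t and k=l]
  have W1: "res2 Q P = res2 (ser_pow (Lh t) l) P"
  proof -
    have tP: "trP 1 (Phi 1 P) = Phi 1 P"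
    proof (rule fls_eqI)
      fix n show "trP 1 (Phi 1 P) $$ n = Phi 1 P $$ n"
        using Phi_nth[OF sm(2) bP(1)[OF sm(2)], of n] by (auto simp: trP_nth[OF sm(2)] P_def pos_part_def)
    qed
    define G where "G = Phi 1 (ser_pow (Lh t) l)"
    have GQ: "G - trP 1 G = Phi 1 Q" unfolding G_def Q_def nonpos_part_Phi(2)[OF sm(2) pl(1)] ..
    have r2: "(trP 1 G * Dp 1 (trP 1 (Phi 1 P))) $$ (- 1) = 0" by (rule res_R2[OF sm(2)])
    have "res2 (ser_pow (Lh t) l) P = (G * Dp 1 (Phi 1 P)) $$ (- 1)"
      using res2_Phi[OF sm(2) pl(1) bP(1)[OF sm(2)]] by (simp add: G_def)
    also have "\<dots> = ((G - trP 1 G) * Dp 1 (Phi 1 P)) $$ (- 1)"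
      using r2 unfolding tP by (simp add: algebra_simps)
    also have "\<dots> = res2 Q P" unfolding GQ using res2_Phi[OF sm(2) bP(2)[OF sm(2)] bP(1)[OF sm(2)]] by simp
    finally show ?thesis ..
  qed
  have tQ: "trP (-1) (Phi (-1) Q) = 0"
  proof (rule fls_eqI)
    fix n show "trP (-1) (Phi (-1) Q) $$ n = 0 $$ n"
      using Phi_nth[OF sm(1) bP(2)[OF sm(1)], of n] by (auto simp: trP_nth[OF sm(1)] Q_def nonpos_part_def)
  qed
  have "res2 (ser_pow (L t) m) Q = (Phi (-1) (ser_pow (L t) m) * Dp (-1) (Phi (-1) Q)) $$ 1"
    using res2_Phi[OF sm(1) pm(1) bP(2)[OF sm(1)]] by simp
  also have "\<dots> = (trP (-1) (Phi (-1) (ser_pow (L t) m)) * Dp (-1) (Phi (-1) Q)) $$ 1"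
  proof -
    have "((Phi (-1) (ser_pow (L t) m) - trP (-1) (Phi (-1) (ser_pow (L t) m)))
          * Dp (-1) (Phi (-1) Q - trP (-1) (Phi (-1) Q))) $$ (- (-1)) = 0"
      by (rule res_R3[OF sm(1)])
    thus ?thesis unfolding tQ by (simp add: algebra_simps)
  qed
  also have "\<dots> = (Phi (-1) P * Dp (-1) (Phi (-1) Q)) $$ 1"
    unfolding P_def pos_part_Phi(2)[OF sm(1) pm(1)] ..
  also have "\<dots> = - (Phi (-1) Q * Dp (-1) (Phi (-1) P)) $$ 1"
    using res_anti[OF sm(1), of "Phi (-1) P" "Phi (-1) Q"] by simp
  also have "- (Phi (-1) Q * Dp (-1) (Phi (-1) P)) $$ 1 = - res2 Q P"
    using res2_Phi[OF sm(1) bP(2)[OF sm(1)] bP(1)[OF sm(1)]] by simp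
  also have "\<dots> = - res2 (ser_pow (Lh t) l) P" using W1 by simp
  finally show ?thesis unfolding P_def Q_def .
qed

lemma kworld_L: "kworld (-1) (Lser f) \<longleftrightarrow> (\<forall>j. regular (\<lambda>t'. Lser f t' j))"
  by (auto simp: kworld_def Lser_def)

lemma regular_const: "regular (\<lambda>_. c)"
  by (simp add: regular_def)

lemma kworld_Lser: assumes "\<forall>i. regular (f i)" shows "kworld (-1) (Lser f)"
  unfolding kworld_L
proof
  fix j
  have "(\<lambda>t'. Lser f t' j) = (if j = 1 then (\<lambda>_. 1) else if j \<le> 0 then f j else (\<lambda>_. 0))"
    by (auto simp: Lser_def)
  then show "regular (\<lambda>t'. Lser f t' j)" using assms by (simp add: regular_const)
qed

lemma kworld_Lhser: assumes "\<forall>i. regular (g i)" "regular u" "\<forall>t. fin_times t \<longrightarrow> u t \<noteq> 0"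
  shows "kworld 1 (Lhser u g)"
  unfolding kworld_def
proof (intro conjI allI impI)
  fix t' j show "1 * j < -1 \<Longrightarrow> Lhser u g t' j = 0" by (simp add: Lhser_def)
next
  fix t' show "fin_times t' \<Longrightarrow> Lhser u g t' (- 1) \<noteq> 0" using assms(3) by (simp add: Lhser_def)
next
  fix j
  have "(\<lambda>t'. Lhser u g t' j) = (if j = -1 then u else if j \<ge> 0 then g (nat j) else (\<lambda>_. 0))"
    by (auto simp: Lhser_def)
  then show "regular (\<lambda>t'. Lhser u g t' j)" using assms by (simp add: regular_const)
qed



theorem proposition2:
  fixes f :: "int \<Rightarrow> times \<Rightarrow> complex"
    and g :: "nat \<Rightarrow> times \<Rightarrow> complex"
    and u :: "times \<Rightarrow> complex"
    and v vh :: "nat \<Rightarrow> times \<Rightarrow> complex"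
  defines "L \<equiv> Lser f"
    and "Lh \<equiv> Lhser u g"
    and "M \<equiv> Mser (Lser f) v"
    and "Mh \<equiv> Mhser (Lhser u g) vh"
  assumes reg: "\<forall>i. regular (f i)" "\<forall>i. regular (g i)" "regular u"
               "\<forall>i. regular (v i)" "\<forall>i. regular (vh i)"
    and u_nz: "\<forall>t. fin_times t \<longrightarrow> u t \<noteq> 0"
    and lax: "\<forall>m n. m + n \<ge> 1 \<longrightarrow>
               lax_eq (Hser L Lh m n) L m n \<and> lax_eq (Hser L Lh m n) M m n \<and>
               lax_eq (Hser L Lh m n) Lh m n \<and> lax_eq (Hser L Lh m n) Mh m n"
    and canon: "\<forall>t. fin_times t \<longrightarrow> pbr L M t = ser_one \<and> pbr Lh Mh t = ser_one"
    and pos: "m > 0" "n > 0" "k > 0" "l > 0"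
    and t: "fin_times t"
  shows "pdt (k,l) (\<lambda>t'. v (m + 1) t' + vh (n + 1) t') t
       = pdt (m,n) (\<lambda>t'. v (k + 1) t' + vh (l + 1) t') t"
proof -
  have sgs: "sg (-1)" "sg 1" by (auto simp: sg_def)
  have KL: "kworld (-1) L" unfolding L_def by (rule kworld_Lser[OF reg(1)])
  have KLh: "kworld 1 Lh" unfolding Lh_def by (rule kworld_Lhser[OF reg(2) reg(3) u_nz])
  have Mg: "M = Mgen fst (1,0) (-1) L v" unfolding M_def L_def Mser_gen ..
  have Mhg: "Mh = Mgen snd (0,1) 1 Lh vh" unfolding Mh_def Lh_def Mhser_gen ..
  have Hb: "\<forall>t' j. int (a + b) < \<bar>j\<bar> \<longrightarrow> Hser L Lh a b t' j = 0" for a b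
  proof (intro allI impI)
    fix t' j assume j: "int (a + b) < \<bar>j\<bar>"
    have "pos_part (ser_pow (L t') a) j = 0" using pos_pow_supp[OF KL, of a t'] j by simp
    moreover have "nonpos_part (ser_pow (Lh t') b) j = 0" using nonpos_pow_supp[OF KLh, of b t'] j by simp
    ultimately show "Hser L Lh a b t' j = 0" by (simp add: Hser_def ser_add_def)
  qed
  have Dv: "pdt (a,b) (v (m' + 1)) t = res2 (ser_pow (L t) m') (Hser L Lh a b t)"
    if ab: "a + b \<ge> 1" and m': "m' \<ge> 1" for a b m'
  proof -
    have lK: "lax_eq (Hser L Lh a b) L a b" using lax ab by blast
    have lN: "lax_eq (Hser L Lh a b) (Mgen fst (1,0) (-1) L v) a b" using lax ab unfolding Mg by blast
    have cn: "\<forall>t. fin_times t \<longrightarrow> pbr L (Mgen fst (1,0) (-1) L v) t = ser_one" using canon unfolding Mg by blast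
    show ?thesis using world[OF sgs(1) KL t ab Hb _ _ reg(4) lK lN cn m'] by simp
  qed
  have Dvh: "pdt (a,b) (vh (n' + 1)) t = - res2 (ser_pow (Lh t) n') (Hser L Lh a b t)"
    if ab: "a + b \<ge> 1" and n': "n' \<ge> 1" for a b n'
  proof -
    have lK: "lax_eq (Hser L Lh a b) Lh a b" using lax ab by blast
    have lN: "lax_eq (Hser L Lh a b) (Mgen snd (0,1) 1 Lh vh) a b" using lax ab unfolding Mhg by blast
    have cn: "\<forall>t. fin_times t \<longrightarrow> pbr Lh (Mgen snd (0,1) 1 Lh vh) t = ser_one" using canon unfolding Mhg by blast
    show ?thesis using world[OF sgs(2) KLh t ab Hb _ _ reg(5) lK lN cn n'] by simp
  qed
  define X1 where "X1 a b = res2 (ser_pow (L t) a) (pos_part (ser_pow (L t) b))" for a b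
  define X2 where "X2 a b = res2 (ser_pow (L t) a) (nonpos_part (ser_pow (Lh t) b))" for a b
  define X3 where "X3 a b = res2 (ser_pow (Lh t) a) (pos_part (ser_pow (L t) b))" for a b
  define X4 where "X4 a b = res2 (ser_pow (Lh t) a) (nonpos_part (ser_pow (Lh t) b))" for a b
  have bP: "bnd s (pos_part (ser_pow (L t) b))" "bnd s (nonpos_part (ser_pow (Lh t) b))" if "sg s" for s b
    using finsupp_bnd[OF that pos_pow_supp[OF KL]] finsupp_bnd[OF that nonpos_pow_supp[OF KLh]] by auto
  have HL: "res2 (ser_pow (L t) a) (Hser L Lh b c t) = X1 a b + X2 a c" for a b c
    unfolding Hser_def X1_def X2_def by (rule res2_add[OF sgs(1) kw_pow(1)[OF sgs(1) KL] bP[OF sgs(1)]])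
  have HLh: "res2 (ser_pow (Lh t) a) (Hser L Lh b c t) = X3 a b + X4 a c" for a b c
    unfolding Hser_def X3_def X4_def by (rule res2_add[OF sgs(2) kw_pow(1)[OF sgs(2) KLh] bP[OF sgs(2)]])
  have S1: "X1 m k = X1 k m" unfolding X1_def by (rule X1_sym[OF sgs(1) KL t pos(1,3)])
  have S4: "X4 n l = X4 l n" unfolding X4_def by (rule X4_sym[OF sgs(2) KLh t pos(2,4)])
  have S23: "X2 a b = - X3 b a" for a b unfolding X2_def X3_def by (rule X23[OF KL KLh])
  have dsum: "pdt (a,b) (\<lambda>t'. v (c + 1) t' + vh (d + 1) t') t = pdt (a,b) (v (c + 1)) t + pdt (a,b) (vh (d + 1)) t"
    if ab: "a + b \<ge> 1" for a b c d
  proof -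
    have "(\<lambda>s. v (c + 1) (t((a,b) := s))) field_differentiable at (t (a,b))"
      using reg(4) t ab unfolding regular_def by auto
    moreover have "(\<lambda>s. vh (d + 1) (t((a,b) := s))) field_differentiable at (t (a,b))"
      using reg(5) t ab unfolding regular_def by auto
    ultimately show ?thesis unfolding pdt_def by simp
  qed
  have kl: "k + l \<ge> 1" and mn: "m + n \<ge> 1" using pos by auto
  have e1: "pdt (k,l) (v (m + 1)) t = X1 m k + X2 m l" using Dv[OF kl, of m] pos HL by simp
  have e2: "pdt (k,l) (vh (n + 1)) t = - (X3 n k + X4 n l)" using Dvh[OF kl, of n] pos HLh by simp
  have e3: "pdt (m,n) (v (k + 1)) t = X1 k m + X2 k n" using Dv[OF mn, of k] pos HL by simp
  have e4: "pdt (m,n) (vh (l + 1)) t = - (X3 l m + X4 l n)" using Dvh[OF mn, of l] pos HLh by simp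
  have "pdt (k,l) (\<lambda>t'. v (m + 1) t' + vh (n + 1) t') t = (X1 m k + X2 m l) - (X3 n k + X4 n l)"
    unfolding dsum[OF kl] e1 e2 by simp
  also have "\<dots> = (X1 k m + X2 k n) - (X3 l m + X4 l n)"
    using S1 S4 S23[of m l] S23[of k n] by simp
  also have "\<dots> = pdt (m,n) (\<lambda>t'. v (k + 1) t' + vh (l + 1) t') t"
    unfolding dsum[OF mn] e3 e4 by simp
  finally show ?thesis .
qed



end
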